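(* Let $n,n'\ge2$, $[n,a,b,r]\in\Lambda_n$ and $[n',a',b',r']\in\Lambda_{n'}$ be distinct indices. Then $G(n,a,b,r)$ and $G(n',a',b',r')$ are isomorphic only when the two indices are $[m,1,m,2]$ and $[2m,2,m,1]$ for some odd $m$. Conversely, for $m$ odd ($m\ge3$), an isomorphism $G(m,1,m,2)\to G(2m,2,m,1)$ is given on generators by $$\begin{pmatrix}1&0\\0&-1\end{pmatrix}\mapsto\begin{pmatrix}0&k\\-k&0\end{pmatrix},\qquad \begin{pmatrix}0&c\\c^{-1}&0\end{pmatrix}\mapsto\begin{pmatrix}0&c\\c^{-1}&0\end{pmatrix}\ \ (c\in\{1,\omega_m,j\}),$$ where $\omega_m=\cos(\pi/m)+i\sin(\pi/m)$.
   Context: $\mathbb{H}$ is the real quaternion algebra with basis $1,i,j,k$. For $n\ge2$ let $\omega_n:=\cos(\pi/n)+i\sin(\pi/n)\in\mathbb{H}$ and $\mathcal{D}_n:=\langle\omega_n,j\rangle$ (dicyclic group of order $4n$). $\Omega_n:=\{(a,b):1\le a\le b\le n,\ a\mid n,\ b\mid n,\ \gcd(a,b)=1\}$, and $\Lambda_n:=\{[n,a,b,\tfrac{n}{ab}]:(a,b)\in\Omega_n\}\cup\{[n,a,b,\tfrac{2n}{ab}]:(a,b)\in\Omega_n,\ ab\text{ odd}\}$. For an index $[n,a,b,r]\in\Lambda_n$, $G(n,a,b,r)$ is the subgroup of $U(\mathbb{H}^2)$ generated by $\mathrm{diag}(\omega_n^{2n/r},1)$ and the matrices $\begin{pmatrix}0&c\\c^{-1}&0\end{pmatrix}$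 for $c\in\{1,\omega_n^a,j,\omega_n^bj\}$ (equivalently, the canonical-form reflection group with nondiagonal reflections given by the closure of $\{1,\omega_n^a,j,\omega_n^bj\}$ under $(x,y)\mapsto xy^{-1}x$, and diagonal reflections $\mathrm{diag}(h,1),\mathrm{diag}(1,h)$, $h\in\langle\omega_n^{2n/r}\rangle\setminus\{1\}$). A reflection is a non-identity $g\in U(\mathbb{H}^2)$ with $\operatorname{rank}(g-I)=1$. Two such reflection groups are called isomorphic if there is a group isomorphism between them mapping the set of reflections of one onto the set of reflections of the other. *)

theory Defs
  imports Complex_Main
begin

datatype quat = Quat (qre: real) (qi: real) (qj: real) (qk: real)

instantiation quat :: "{zero, one, plus, minus, uminus, times, inverse, power}"
begin
definition "0 = Quat 0 0 0 0"
definition "1 = Quat 1 0 0 0"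
definition "p + q = Quat (qre p + qre q) (qi p + qi q) (qj p + qj q) (qk p + qk q)"
definition "p - q = Quat (qre p - qre q) (qi p - qi q) (qj p - qj q) (qk p - qk q)"
definition "- q = Quat (- qre q) (- qi q) (- qj q) (- qk q)"
definition "p * q = Quat
   (qre p * qre q - qi p * qi q - qj p * qj q - qk p * qk q)
   (qre p * qi q + qi p * qre q + qj p * qk q - qk p * qj q)
   (qre p * qj q - qi p * qk q + qj p * qre q + qk p * qi q)
   (qre p * qk q + qi p * qj q - qj p * qi q + qk p * qre q)"
definition "inverse q = (let s = qre q ^ 2 + qi q ^ 2 + qj q ^ 2 + qk q ^ 2 in
   Quat (qre q / s) (- qi q / s) (- qj q / s) (- qk q / s))"
definition "divide p q = p * inverse (q :: quat)"
instance ..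
end

definition qcnj :: "quat \<Rightarrow> quat" where
  "qcnj q = Quat (qre q) (- qi q) (- qj q) (- qk q)"

definition quat_i :: quat where "quat_i = Quat 0 1 0 0"
definition quat_j :: quat where "quat_j = Quat 0 0 1 0"
definition quat_k :: quat where "quat_k = Quat 0 0 0 1"

definition omega :: "nat \<Rightarrow> quat" where
  "omega n = Quat (cos (pi / real n)) (sin (pi / real n)) 0 0"

text \<open>M2 a b c d is the matrix with rows (a b) and (c d).\<close>
datatype m2 = M2 quat quat quat quat

fun mmul :: "m2 \<Rightarrow> m2 \<Rightarrow> m2" where
  "mmul (M2 a b c d) (M2 e f g h) =
     M2 (a * e + b * g) (a * f + b * h) (c * e + d * g) (c * f + d * h)"

fun msub :: "m2 \<Rightarrow> m2 \<Rightarrow> m2" where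
  "msub (M2 a b c d) (M2 e f g h) = M2 (a - e) (b - f) (c - g) (d - h)"

fun madj :: "m2 \<Rightarrow> m2" where
  "madj (M2 a b c d) = M2 (qcnj a) (qcnj c) (qcnj b) (qcnj d)"

definition mI :: m2 where "mI = M2 1 0 0 1"
definition mzero :: m2 where "mzero = M2 0 0 0 0"

text \<open>Rank of a 2x2 quaternion matrix: the maximal number of right-linearly
  independent columns (columns (a,c) and (b,d)).\<close>
fun cols_dependent :: "m2 \<Rightarrow> bool" where
  "cols_dependent (M2 a b c d) =
     (\<exists>x y. (x \<noteq> 0 \<or> y \<noteq> 0) \<and> a * x + b * y = 0 \<and> c * x + d * y = 0)"

definition mrank :: "m2 \<Rightarrow> nat" where
  "mrank A = (if A = mzero then 0 else if cols_dependent A then 1 else 2)"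

definition is_reflection :: "m2 \<Rightarrow> bool" where
  "is_reflection g \<longleftrightarrow> g \<noteq> mI \<and> mrank (msub g mI) = 1"

text \<open>Subgroup of U(H^2) generated by a set S of unitary matrices
  (inverses of unitary generators are their conjugate transposes).\<close>
inductive_set gen_grp :: "m2 set \<Rightarrow> m2 set" for S where
  gen_one: "mI \<in> gen_grp S"
| gen_mul: "g \<in> gen_grp S \<Longrightarrow> s \<in> S \<Longrightarrow> mmul s g \<in> gen_grp S"
| gen_inv: "g \<in> gen_grp S \<Longrightarrow> s \<in> S \<Longrightarrow> mmul (madj s) g \<in> gen_grp S"

definition Nmat :: "quat \<Rightarrow> m2" where
  "Nmat c = M2 0 c (inverse c) 0"

definition Omega_set :: "nat \<Rightarrow> (nat \<times> nat) set" where
  "Omega_set n = {(a, b). 1 \<le> a \<and> a \<le> b \<and> b \<le> n \<and> a dvd n \<and> b dvd n \<and> coprime a b}"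

definition Lambda_set :: "nat \<Rightarrow> (nat \<times> nat \<times> nat \<times> nat) set" where
  "Lambda_set n =
     {(n, a, b, n div (a * b)) | a b. (a, b) \<in> Omega_set n}
   \<union> {(n, a, b, (2 * n) div (a * b)) | a b. (a, b) \<in> Omega_set n \<and> odd (a * b)}"

definition Ggrp :: "nat \<Rightarrow> nat \<Rightarrow> nat \<Rightarrow> nat \<Rightarrow> m2 set" where
  "Ggrp n a b r = gen_grp
     ({M2 (omega n ^ ((2 * n) div r)) 0 0 1}
      \<union> Nmat ` {1, omega n ^ a, quat_j, omega n ^ b * quat_j})"

definition refl_iso :: "(m2 \<Rightarrow> m2) \<Rightarrow> m2 set \<Rightarrow> m2 set \<Rightarrow> bool" where
  "refl_iso f G H \<longleftrightarrow> bij_betw f G H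
     \<and> (\<forall>x\<in>G. \<forall>y\<in>G. f (mmul x y) = mmul (f x) (f y))
     \<and> f ` {g \<in> G. is_reflection g} = {h \<in> H. is_reflection h}"

definition refl_isomorphic :: "m2 set \<Rightarrow> m2 set \<Rightarrow> bool" where
  "refl_isomorphic G H \<longleftrightarrow> (\<exists>f. refl_iso f G H)"

end

theory Submission
  imports Defs
begin


lemma quat_eqI: "qre p = qre q \<Longrightarrow> qi p = qi q \<Longrightarrow> qj p = qj q \<Longrightarrow> qk p = qk q \<Longrightarrow> p = q"
  by (cases p; cases q) auto

lemma quat_ops [simp]:
  "qre 0 = 0" "qi 0 = 0" "qj 0 = 0" "qk 0 = 0"
  "qre 1 = 1" "qi 1 = 0" "qj 1 = 0" "qk 1 = 0"
  "qre (p + q) = qre p + qre q" "qi (p + q) = qi p + qi q" "qj (p + q) = qj p + qj q" "qk (p + q) = qk p + qk q"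
  "qre (p - q) = qre p - qre q" "qi (p - q) = qi p - qi q" "qj (p - q) = qj p - qj q" "qk (p - q) = qk p - qk q"
  "qre (- q) = - qre q" "qi (- q) = - qi q" "qj (- q) = - qj q" "qk (- q) = - qk q"
  "qre (p * q) = qre p * qre q - qi p * qi q - qj p * qj q - qk p * qk q"
  "qi (p * q) = qre p * qi q + qi p * qre q + qj p * qk q - qk p * qj q"
  "qj (p * q) = qre p * qj q - qi p * qk q + qj p * qre q + qk p * qi q"
  "qk (p * q) = qre p * qk q + qi p * qj q - qj p * qi q + qk p * qre q"
  by (simp_all add: zero_quat_def one_quat_def plus_quat_def minus_quat_def uminus_quat_def times_quat_def)

definition qn2 :: "quat \<Rightarrow> real" where "qn2 q = qre q ^ 2 + qi q ^ 2 + qj q ^ 2 + qk q ^ 2"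

lemma qn2_zero: "qn2 q = 0 \<longleftrightarrow> q = 0"
proof
  assume "qn2 q = 0"
  then have "qre q = 0 \<and> qi q = 0 \<and> qj q = 0 \<and> qk q = 0" unfolding qn2_def
  proof -
    have "qre q ^ 2 = 0" "qi q ^ 2 = 0" "qj q ^ 2 = 0" "qk q ^ 2 = 0"
      using \<open>qn2 q = 0\<close> unfolding qn2_def
      by (smt (verit) zero_le_power2)+
    then show ?thesis by simp
  qed
  then show "q = 0" by (auto intro: quat_eqI)
qed (simp add: qn2_def)

lemma quat_inverse_comps [simp]:
  "qre (inverse q) = qre q / qn2 q" "qi (inverse q) = - qi q / qn2 q"
  "qj (inverse q) = - qj q / qn2 q" "qk (inverse q) = - qk q / qn2 q"
  by (simp_all add: inverse_quat_def qn2_def Let_def)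

instance quat :: division_ring
proof
  fix a b c :: quat
  show "a * b * c = a * (b * c)" by (rule quat_eqI) (simp_all add: algebra_simps)
  show "1 * a = a" by (rule quat_eqI) simp_all
  show "a * 1 = a" by (rule quat_eqI) simp_all
  show "a + b + c = a + (b + c)" by (rule quat_eqI) simp_all
  show "a + b = b + a" by (rule quat_eqI) simp_all
  show "0 + a = a" by (rule quat_eqI) simp_all
  show "- a + a = 0" by (rule quat_eqI) simp_all
  show "a - b = a + - b" by (rule quat_eqI) simp_all
  show "(a + b) * c = a * c + b * c" by (rule quat_eqI) (simp_all add: algebra_simps)
  show "a * (b + c) = a * b + a * c" by (rule quat_eqI) (simp_all add: algebra_simps)
  show "(0::quat) \<noteq> 1" by (metis quat_ops(1) quat_ops(5) zero_neq_one)
  show "a / b = a * inverse b" by (simp add: divide_quat_def)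
  show "inverse (0::quat) = 0" by (rule quat_eqI) (simp_all add: qn2_def)
  assume "a \<noteq> 0"
  then have nz: "qn2 a \<noteq> 0" by (simp add: qn2_zero)
  have e: "qre a * qre a + qi a * qi a + qj a * qj a + qk a * qk a = qn2 a"
    by (simp add: qn2_def power2_eq_square)
  show "inverse a * a = 1"
    using nz e by (intro quat_eqI) (simp_all add: field_simps)
  show "a * inverse a = 1"
    using nz e by (intro quat_eqI) (simp_all add: field_simps)
qed

section \<open>Encoding of dicyclic elements\<close>

definition ang :: "nat \<Rightarrow> int \<Rightarrow> real" where "ang n k = of_int k * pi / of_nat n"

definition W :: "nat \<Rightarrow> int \<Rightarrow> quat" where
  "W n k = Quat (cos (ang n k)) (sin (ang n k)) 0 0"
definition WJ :: "nat \<Rightarrow> int \<Rightarrow> quat" where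
  "WJ n k = Quat 0 0 (cos (ang n k)) (sin (ang n k))"

lemma W_comps [simp]:
  "qre (W n k) = cos (ang n k)" "qi (W n k) = sin (ang n k)"
  "qj (W n k) = 0" "qk (W n k) = 0"
  "qre (WJ n k) = 0" "qi (WJ n k) = 0"
  "qj (WJ n k) = cos (ang n k)" "qk (WJ n k) = sin (ang n k)"
  by (simp_all add: W_def WJ_def)

lemma ang_add: "ang n (k + l) = ang n k + ang n l"
  by (simp add: ang_def add_divide_distrib distrib_right)
lemma ang_diff: "ang n (k - l) = ang n k - ang n l"
  by (simp add: ang_def diff_divide_distrib left_diff_distrib)
lemma ang_neg [simp]: "ang n (- k) = - (ang n k)"
  by (simp add: ang_def)
lemma ang_n: "n > 0 \<Longrightarrow> ang n (int n) = pi"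
  by (simp add: ang_def)
lemma ang_0 [simp]: "ang n 0 = 0"
  by (simp add: ang_def)

lemma W_mult [simp]: "W n k * W n l = W n (k + l)"
  by (rule quat_eqI) (simp_all add: ang_add cos_add sin_add algebra_simps)
lemma W_WJ [simp]: "W n k * WJ n l = WJ n (k + l)"
  by (rule quat_eqI) (simp_all add: ang_add cos_add sin_add algebra_simps)
lemma WJ_W [simp]: "WJ n k * W n l = WJ n (k - l)"
  by (rule quat_eqI) (simp_all add: ang_diff cos_diff sin_diff algebra_simps)
lemma WJ_WJ: "n > 0 \<Longrightarrow> WJ n k * WJ n l = W n (k - l + int n)"
  by (rule quat_eqI) (simp_all add: ang_add ang_diff ang_n cos_diff sin_diff algebra_simps)

lemma W_zero [simp]: "W n 0 = 1" by (rule quat_eqI) simp_all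
lemma WJ_zero: "WJ n 0 = quat_j" by (rule quat_eqI) (simp_all add: quat_j_def)
lemma W_n: "n > 0 \<Longrightarrow> W n (int n) = -1" by (rule quat_eqI) (simp_all add: ang_n)

lemma omega_pow: "omega n ^ k = W n (int k)"
proof (induction k)
  case 0 then show ?case by simp
next
  case (Suc k)
  have "omega n = W n 1" by (rule quat_eqI) (simp_all add: omega_def ang_def)
  then show ?case using Suc by (simp add: add.commute)
qed

lemma W_inverse: "inverse (W n k) = W n (- k)"
proof -
  have "W n k * W n (- k) = 1" by simp
  then show ?thesis by (metis inverse_unique)
qed

lemma WJ_inverse: "n > 0 \<Longrightarrow> inverse (WJ n k) = WJ n (k + int n)"
proof -
  assume "n > 0"
  then have "WJ n k * WJ n (k + int n) = 1" by (simp add: WJ_WJ)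
  then show ?thesis by (metis inverse_unique)
qed

lemma W_cnj: "qcnj (W n k) = W n (- k)"
  by (rule quat_eqI) (simp_all add: qcnj_def)
lemma WJ_cnj: "n > 0 \<Longrightarrow> qcnj (WJ n k) = WJ n (k + int n)"
  by (rule quat_eqI) (simp_all add: qcnj_def ang_add ang_n)

lemma cos_sin_eq_int:
  assumes "n > 0"
  shows "(cos (ang n k) = cos (ang n l) \<and>
          sin (ang n k) = sin (ang n l)) \<longleftrightarrow> (2 * int n) dvd (k - l)"
proof -
  have "(cos (ang n k) = cos (ang n l) \<and>
          sin (ang n k) = sin (ang n l)) \<longleftrightarrow>
        (\<exists>m::int. ang n k = ang n l + 2 * pi * of_int m)"
    using sin_cos_eq_iff by blast
  also have "\<dots> \<longleftrightarrow> (\<exists>m::int. k = l + 2 * int n * m)"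
  proof (intro ex_cong1)
    fix m :: int
    have "ang n k = ang n l + 2 * pi * of_int m \<longleftrightarrow>
          of_int k * pi = (of_int l + 2 * of_int m * of_nat n) * pi"
      using assms by (simp add: ang_def field_simps)
    also have "\<dots> \<longleftrightarrow> (of_int k :: real) = of_int l + 2 * of_int m * of_nat n"
      using mult_cancel_right[of "real_of_int k" pi "real_of_int l + 2 * real_of_int m * real n"] by simp
    also have "\<dots> \<longleftrightarrow> k = l + 2 * int n * m"
    proof -
      have "(of_int k :: real) = of_int l + 2 * of_int m * of_nat n \<longleftrightarrow> (of_int k :: real) = of_int (l + 2 * int n * m)"
        by (simp add: algebra_simps)
      then show ?thesis by (simp only: of_int_eq_iff)
    qed
    finally show "ang n k = ang n l + 2 * pi * of_int m \<longleftrightarrow> k = l + 2 * int n * m" .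
  qed
  also have "\<dots> \<longleftrightarrow> (2 * int n) dvd (k - l)"
    by (auto simp: dvd_def algebra_simps)
  finally show ?thesis .
qed

lemma W_eq_iff: "n > 0 \<Longrightarrow> W n k = W n l \<longleftrightarrow> (2 * int n) dvd (k - l)"
  using cos_sin_eq_int[of n k l] by (auto simp: W_def)
lemma WJ_eq_iff: "n > 0 \<Longrightarrow> WJ n k = WJ n l \<longleftrightarrow> (2 * int n) dvd (k - l)"
  using cos_sin_eq_int[of n k l] by (auto simp: WJ_def)
lemma W_neq_WJ: "W n k \<noteq> WJ n l"
proof
  assume "W n k = WJ n l"
  then have "cos (ang n k) = 0" "sin (ang n k) = 0"
    by (metis W_comps(1) W_comps(5), metis W_comps(2) W_comps(6))
  then show False using sin_cos_squared_add[of "ang n k"] by simp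
qed
lemma W_eq_1_iff: "n > 0 \<Longrightarrow> W n k = 1 \<longleftrightarrow> (2 * int n) dvd k"
  using W_eq_iff[of n k 0] by simp
lemma W_nonzero: "W n k \<noteq> 0"
proof
  assume "W n k = 0"
  then have "cos (ang n k) = 0" "sin (ang n k) = 0"
    by (metis W_comps(1) quat_ops(1), metis W_comps(2) quat_ops(2))
  then show False using sin_cos_squared_add[of "ang n k"] by simp
qed
lemma WJ_nonzero: "WJ n k \<noteq> 0"
proof
  assume "WJ n k = 0"
  then have "cos (ang n k) = 0" "sin (ang n k) = 0"
    by (metis W_comps(7) quat_ops(3), metis W_comps(8) quat_ops(4))
  then show False using sin_cos_squared_add[of "ang n k"] by simp
qed
lemma WJ_neq_1: "WJ n k \<noteq> 1"
  by (metis W_neq_WJ W_zero)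

lemma W_period: "n > 0 \<Longrightarrow> (2 * int n) dvd (k - l) \<Longrightarrow> W n k = W n l"
  by (simp add: W_eq_iff)
lemma WJ_period: "n > 0 \<Longrightarrow> (2 * int n) dvd (k - l) \<Longrightarrow> WJ n k = WJ n l"
  by (simp add: WJ_eq_iff)


lemma mmul_assoc: "mmul (mmul x y) z = mmul x (mmul y z)"
  by (cases x; cases y; cases z) (simp add: algebra_simps)

lemma mmul_mI [simp]: "mmul mI g = g" "mmul g mI = g"
  by (cases g; simp add: mI_def)+

lemma gen_grp_mult: "g \<in> gen_grp S \<Longrightarrow> h \<in> gen_grp S \<Longrightarrow> mmul g h \<in> gen_grp S"
proof (induction g rule: gen_grp.induct)
  case gen_one then show ?case by simp
next
  case (gen_mul g s) then show ?case by (simp add: mmul_assoc gen_grp.gen_mul)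
next
  case (gen_inv g s) then show ?case by (simp add: mmul_assoc gen_grp.gen_inv)
qed

lemma gen_grp_gen: "s \<in> S \<Longrightarrow> s \<in> gen_grp S"
  using gen_grp.gen_mul[OF gen_grp.gen_one, of s S] by simp

lemma gen_grp_mono:
  assumes "S \<subseteq> gen_grp T" "\<And>s. s \<in> S \<Longrightarrow> madj s \<in> gen_grp T"
  shows "gen_grp S \<subseteq> gen_grp T"
proof
  fix g assume "g \<in> gen_grp S"
  then show "g \<in> gen_grp T"
  proof (induction g rule: gen_grp.induct)
    case gen_one then show ?case by (rule gen_grp.gen_one)
  next
    case (gen_mul g s) then show ?case using assms gen_grp_mult by blast
  next
    case (gen_inv g s) then show ?case using assms gen_grp_mult by blast
  qed
qed

primrec mpow :: "m2 \<Rightarrow> nat \<Rightarrow> m2" where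
  "mpow g 0 = mI"
| "mpow g (Suc k) = mmul g (mpow g k)"

lemma mpow_add: "mpow g (i + j) = mmul (mpow g i) (mpow g j)"
  by (induction i) (simp_all add: mmul_assoc)

lemma mpow_mult: "mpow g (i * j) = mpow (mpow g i) j"
  by (induction j) (simp_all add: mpow_add mult.commute[of i] add.commute mmul_assoc)

lemma mpow_in: "g \<in> gen_grp S \<Longrightarrow> mpow g k \<in> gen_grp S"
  by (induction k) (simp_all add: gen_grp.gen_one gen_grp_mult)

lemma mpow_mI [simp]: "mpow mI k = mI"
  by (induction k) simp_all

lemma mpow_order_dvd:
  assumes "mpow g k = mI" "\<And>j. 0 < j \<Longrightarrow> j < k \<Longrightarrow> mpow g j \<noteq> mI" "0 < k" "mpow g u = mI"
  shows "k dvd u"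
proof -
  have "u = (u div k) * k + u mod k" by simp
  then have "mpow g u = mmul (mpow (mpow g k) (u div k)) (mpow g (u mod k))"
    by (metis mpow_add mpow_mult mult.commute)
  then have "mpow g (u mod k) = mI" using assms by simp
  moreover have "u mod k < k" using assms(3) by simp
  ultimately have "u mod k = 0" using assms(2) by (metis neq0_conv)
  then show ?thesis by auto
qed

section \<open>Reflections of monomial matrices\<close>

lemma quat_inv_comm: "y * x = (1::quat) \<Longrightarrow> x * y = 1"
proof -
  assume h: "y * x = 1"
  then have "y \<noteq> 0" by auto
  from h have "inverse y = x" using inverse_unique[of y x] by simp
  then show ?thesis using \<open>y \<noteq> 0\<close> by (metis left_inverse)
qed

lemma is_reflection_diag:
  "is_reflection (M2 x 0 0 y) \<longleftrightarrow> (x \<noteq> 1 \<or> y \<noteq> 1) \<and> (x = 1 \<or> y = 1)"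
proof -
  have ne: "M2 x 0 0 y \<noteq> mI \<longleftrightarrow> (x \<noteq> 1 \<or> y \<noteq> 1)" by (auto simp: mI_def)
  have sub: "msub (M2 x 0 0 y) mI = M2 (x - 1) 0 0 (y - 1)" by (simp add: mI_def)
  have cd: "cols_dependent (M2 (x - 1) 0 0 (y - 1)) \<longleftrightarrow> (x = 1 \<or> y = 1)"
  proof
    assume "cols_dependent (M2 (x - 1) 0 0 (y - 1))"
    then obtain a b where "a \<noteq> 0 \<or> b \<noteq> 0" "(x - 1) * a = 0" "(y - 1) * b = 0" by auto
    then show "x = 1 \<or> y = 1" by auto
  next
    assume "x = 1 \<or> y = 1"
    then show "cols_dependent (M2 (x - 1) 0 0 (y - 1))"
    proof
      assume h: "x = 1" show ?thesis
        unfolding cols_dependent.simps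
        by (rule exI[where x="1::quat"], rule exI[where x="0::quat"]) (simp add: h)
    next
      assume h: "y = 1" show ?thesis
        unfolding cols_dependent.simps
        by (rule exI[where x="0::quat"], rule exI[where x="1::quat"]) (simp add: h)
    qed
  qed
  show ?thesis
    unfolding is_reflection_def mrank_def sub using ne cd by (auto simp: mzero_def mI_def)
qed

lemma is_reflection_anti:
  "is_reflection (M2 0 x y 0) \<longleftrightarrow> y * x = 1"
proof -
  have ne: "M2 0 x y 0 \<noteq> mI" by (simp add: mI_def)
  have sub: "msub (M2 0 x y 0) mI = M2 (- 1) x y (- 1)" by (simp add: mI_def)
  have nz: "M2 (- 1) x y (- 1) \<noteq> mzero" by (simp add: mzero_def)
  have cd: "cols_dependent (M2 (- 1) x y (- 1)) \<longleftrightarrow> y * x = 1"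
  proof
    assume "cols_dependent (M2 (- 1) x y (- 1))"
    then obtain a b where ab: "a \<noteq> 0 \<or> b \<noteq> 0" "- 1 * a + x * b = 0" "y * a + - 1 * b = 0" by auto
    then have a: "a = x * b" by (simp add: algebra_simps)
    with ab have b: "b = y * x * b" by (simp add: algebra_simps)
    with ab a have "b \<noteq> 0" by auto
    from b have "(1 - y * x) * b = 0" by (simp add: algebra_simps)
    with \<open>b \<noteq> 0\<close> show "y * x = 1" by simp
  next
    assume h: "y * x = 1"
    show "cols_dependent (M2 (- 1) x y (- 1))"
      unfolding cols_dependent.simps by (rule exI[where x=x], rule exI[where x="1::quat"]) (simp add: h)
  qed
  show ?thesis
    unfolding is_reflection_def mrank_def sub using ne nz cd by auto
qed

definition X :: "nat \<Rightarrow> bool \<Rightarrow> int \<Rightarrow> quat" where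
  "X n e k = (if e then WJ n k else W n k)"

definition xe :: "nat \<Rightarrow> bool \<Rightarrow> bool \<Rightarrow> int \<Rightarrow> int \<Rightarrow> int" where
  "xe n e e' k l = (if e then (if e' then k - l + int n else k - l) else k + l)"

lemma X_mult: "n > 0 \<Longrightarrow> X n e k * X n e' l = X n (e \<noteq> e') (xe n e e' k l)"
  by (simp add: X_def xe_def WJ_WJ)

lemma X_nonzero [simp]: "X n e k \<noteq> 0"
  by (simp add: X_def W_nonzero WJ_nonzero)

lemma X_eq_iff: "n > 0 \<Longrightarrow> X n e k = X n e' l \<longleftrightarrow> e = e' \<and> (2 * int n) dvd (k - l)"
  by (cases e; cases e') (auto simp: X_def W_eq_iff WJ_eq_iff W_neq_WJ W_neq_WJ[symmetric])

lemma X_eq_1_iff: "n > 0 \<Longrightarrow> X n e k = 1 \<longleftrightarrow> \<not> e \<and> (2 * int n) dvd k"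
  by (auto simp: X_def W_eq_1_iff WJ_neq_1)

definition DM :: "nat \<Rightarrow> bool \<Rightarrow> int \<Rightarrow> int \<Rightarrow> m2" where
  "DM n e k1 k2 = M2 (X n e k1) 0 0 (X n e k2)"
definition AM :: "nat \<Rightarrow> bool \<Rightarrow> int \<Rightarrow> int \<Rightarrow> m2" where
  "AM n e k1 k2 = M2 0 (X n e k1) (X n e k2) 0"

lemma mmul_DM_DM: "n > 0 \<Longrightarrow> mmul (DM n e k1 k2) (DM n e' l1 l2) = DM n (e \<noteq> e') (xe n e e' k1 l1) (xe n e e' k2 l2)"
  by (simp add: DM_def X_mult)
lemma mmul_DM_AM: "n > 0 \<Longrightarrow> mmul (DM n e k1 k2) (AM n e' l1 l2) = AM n (e \<noteq> e') (xe n e e' k1 l1) (xe n e e' k2 l2)"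
  by (simp add: DM_def AM_def X_mult)
lemma mmul_AM_DM: "n > 0 \<Longrightarrow> mmul (AM n e k1 k2) (DM n e' l1 l2) = AM n (e \<noteq> e') (xe n e e' k1 l2) (xe n e e' k2 l1)"
  by (simp add: DM_def AM_def X_mult)
lemma mmul_AM_AM: "n > 0 \<Longrightarrow> mmul (AM n e k1 k2) (AM n e' l1 l2) = DM n (e \<noteq> e') (xe n e e' k1 l2) (xe n e e' k2 l1)"
  by (simp add: DM_def AM_def X_mult)

lemmas mmul_enc = mmul_DM_DM mmul_DM_AM mmul_AM_DM mmul_AM_AM

lemma DM_eq_iff: "n > 0 \<Longrightarrow> DM n e k1 k2 = DM n e' l1 l2 \<longleftrightarrow> e = e' \<and> (2 * int n) dvd (k1 - l1) \<and> (2 * int n) dvd (k2 - l2)"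
  by (auto simp: DM_def X_eq_iff)
lemma AM_eq_iff: "n > 0 \<Longrightarrow> AM n e k1 k2 = AM n e' l1 l2 \<longleftrightarrow> e = e' \<and> (2 * int n) dvd (k1 - l1) \<and> (2 * int n) dvd (k2 - l2)"
  by (auto simp: AM_def X_eq_iff)
lemma DM_neq_AM: "DM n e k1 k2 \<noteq> AM n e' l1 l2"
  by (simp add: DM_def AM_def)

lemma mI_DM: "mI = DM n False 0 0"
  by (simp add: mI_def DM_def X_def)

lemma DM_eq_mI: "n > 0 \<Longrightarrow> DM n e k1 k2 = mI \<longleftrightarrow> \<not> e \<and> (2 * int n) dvd k1 \<and> (2 * int n) dvd k2"
  by (simp add: mI_DM[of n] DM_eq_iff)
lemma AM_neq_mI: "AM n e k1 k2 \<noteq> mI"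
  by (simp add: mI_DM[of n] DM_neq_AM[symmetric])

lemma refl_DM: "n > 0 \<Longrightarrow> is_reflection (DM n e k1 k2) \<longleftrightarrow>
   \<not> e \<and> (\<not> (2 * int n) dvd k1 \<or> \<not> (2 * int n) dvd k2) \<and> ((2 * int n) dvd k1 \<or> (2 * int n) dvd k2)"
  by (auto simp: DM_def is_reflection_diag X_eq_1_iff)

lemma refl_AM: "n > 0 \<Longrightarrow> is_reflection (AM n e k1 k2) \<longleftrightarrow>
   (if e then (2 * int n) dvd (k2 - k1 + int n) else (2 * int n) dvd (k1 + k2))"
  by (auto simp: AM_def is_reflection_anti X_mult X_eq_1_iff xe_def algebra_simps)

lemma mpow_DM_F: "mpow (DM n False k1 k2) j = DM n False (int j * k1) (int j * k2)"
  by (induction j) (simp_all add: mI_DM[of n] DM_def X_def algebra_simps)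


lemma dvd_lin3: "(m::int) dvd A \<Longrightarrow> m dvd B \<Longrightarrow> m dvd N \<Longrightarrow> Y = i * A + j * B + k * N \<Longrightarrow> m dvd Y"
  by simp

lemmas lins = dvd_lin3[where i=1 and j=1 and k=0] dvd_lin3[where i=1 and j="-1" and k=0]
  dvd_lin3[where i="-1" and j=1 and k=0] dvd_lin3[where i="-1" and j="-1" and k=0]
  dvd_lin3[where i=1 and j=1 and k=1] dvd_lin3[where i=1 and j="-1" and k=1]
  dvd_lin3[where i="-1" and j=1 and k=1] dvd_lin3[where i="-1" and j="-1" and k=1]
  dvd_lin3[where i=1 and j=1 and k="-1"] dvd_lin3[where i=1 and j="-1" and k="-1"]
  dvd_lin3[where i="-1" and j=1 and k="-1"] dvd_lin3[where i="-1" and j="-1" and k="-1"]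
  dvd_lin3[where i=1 and j=0 and k=0] dvd_lin3[where i="-1" and j=0 and k=0]
  dvd_lin3[where i=1 and j=0 and k=1] dvd_lin3[where i="-1" and j=0 and k=1]
  dvd_lin3[where i=1 and j=0 and k="-1"] dvd_lin3[where i="-1" and j=0 and k="-1"]

section \<open>The invariant set\<close>

definition condS :: "nat \<Rightarrow> int \<Rightarrow> int \<Rightarrow> bool \<Rightarrow> int \<Rightarrow> int \<Rightarrow> bool" where
  "condS n ms md e k1 k2 \<longleftrightarrow> ms dvd (k1 + k2 - (if e then int n else 0)) \<and> md dvd (k1 - k2 - (if e then int n else 0))"

definition SS :: "nat \<Rightarrow> int \<Rightarrow> int \<Rightarrow> m2 set" where
  "SS n ms md = {DM n e k1 k2 |e k1 k2. condS n ms md e k1 k2} \<union> {AM n e k1 k2 |e k1 k2. condS n ms md e k1 k2}"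

lemma condS_mult1:
  assumes "condS n ms md e k1 k2" "condS n ms md e' l1 l2" "ms dvd 2 * int n" "md dvd 2 * int n"
  shows "condS n ms md (e \<noteq> e') (xe n e e' k1 l1) (xe n e e' k2 l2)"
proof -
  from assms have a: "ms dvd (k1 + k2 - (if e then int n else 0))" "md dvd (k1 - k2 - (if e then int n else 0))"
    and b: "ms dvd (l1 + l2 - (if e' then int n else 0))" "md dvd (l1 - l2 - (if e' then int n else 0))"
    and c: "ms dvd 2 * int n" "md dvd 2 * int n" by (auto simp: condS_def)
  show ?thesis unfolding condS_def xe_def
    by (cases e; cases e'; simp; intro conjI;
        (rule lins[OF a(1) b(1) c(1)] lins[OF a(2) b(2) c(2)]; (simp add: algebra_simps; fail)))
qed

lemma condS_mult2:
  assumes "condS n ms md e k1 k2" "condS n ms md e' l1 l2" "ms dvd 2 * int n" "md dvd 2 * int n"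
  shows "condS n ms md (e \<noteq> e') (xe n e e' k1 l2) (xe n e e' k2 l1)"
proof -
  from assms have a: "ms dvd (k1 + k2 - (if e then int n else 0))" "md dvd (k1 - k2 - (if e then int n else 0))"
    and b: "ms dvd (l1 + l2 - (if e' then int n else 0))" "md dvd (l1 - l2 - (if e' then int n else 0))"
    and c: "ms dvd 2 * int n" "md dvd 2 * int n" by (auto simp: condS_def)
  show ?thesis unfolding condS_def xe_def
    by (cases e; cases e'; simp; intro conjI;
        (rule lins[OF a(1) b(1) c(1)] lins[OF a(2) b(2) c(2)]; (simp add: algebra_simps; fail)))
qed

lemma SS_mult:
  assumes "n > 0" "ms dvd 2 * int n" "md dvd 2 * int n" "g \<in> SS n ms md" "h \<in> SS n ms md"
  shows "mmul g h \<in> SS n ms md"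
proof -
  from assms(4) obtain e k1 k2 where g: "g = DM n e k1 k2 \<or> g = AM n e k1 k2" "condS n ms md e k1 k2"
    by (auto simp: SS_def)
  from assms(5) obtain e' l1 l2 where h: "h = DM n e' l1 l2 \<or> h = AM n e' l1 l2" "condS n ms md e' l1 l2"
    by (auto simp: SS_def)
  have c1: "condS n ms md (e \<noteq> e') (xe n e e' k1 l1) (xe n e e' k2 l2)"
    by (rule condS_mult1[OF g(2) h(2) assms(2,3)])
  have c2: "condS n ms md (e \<noteq> e') (xe n e e' k1 l2) (xe n e e' k2 l1)"
    by (rule condS_mult2[OF g(2) h(2) assms(2,3)])
  have D: "DM n e'' x y \<in> SS n ms md" if "condS n ms md e'' x y" for e'' x y
    using that unfolding SS_def by blast
  have A: "AM n e'' x y \<in> SS n ms md" if "condS n ms md e'' x y" for e'' x y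
    using that unfolding SS_def by blast
  from g(1) h(1) show ?thesis
  proof (elim disjE)
    assume "g = DM n e k1 k2" "h = DM n e' l1 l2"
    then show ?thesis using D[OF c1] mmul_DM_DM[OF assms(1), of e k1 k2 e' l1 l2] by (simp only:)
  next
    assume "g = DM n e k1 k2" "h = AM n e' l1 l2"
    then show ?thesis using A[OF c1] mmul_DM_AM[OF assms(1), of e k1 k2 e' l1 l2] by (simp only:)
  next
    assume "g = AM n e k1 k2" "h = DM n e' l1 l2"
    then show ?thesis using A[OF c2] mmul_AM_DM[OF assms(1), of e k1 k2 e' l1 l2] by (simp only:)
  next
    assume "g = AM n e k1 k2" "h = AM n e' l1 l2"
    then show ?thesis using D[OF c2] mmul_AM_AM[OF assms(1), of e k1 k2 e' l1 l2] by (simp only:)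
  qed
qed

definition cj :: "nat \<Rightarrow> bool \<Rightarrow> int \<Rightarrow> int" where
  "cj n e k = (if e then k + int n else - k)"

lemma qcnj_zero [simp]: "qcnj 0 = 0"
  by (rule quat_eqI) (simp_all add: qcnj_def)

lemma X_cnj: "n > 0 \<Longrightarrow> qcnj (X n e k) = X n e (cj n e k)"
  by (simp add: X_def cj_def W_cnj WJ_cnj)

lemma X_inverse: "n > 0 \<Longrightarrow> inverse (X n e k) = X n e (cj n e k)"
  by (simp add: X_def cj_def W_inverse WJ_inverse)

lemma madj_DM: "n > 0 \<Longrightarrow> madj (DM n e k1 k2) = DM n e (cj n e k1) (cj n e k2)"
  by (simp add: DM_def X_cnj)
lemma madj_AM: "n > 0 \<Longrightarrow> madj (AM n e k1 k2) = AM n e (cj n e k2) (cj n e k1)"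
  by (simp add: AM_def X_cnj)
lemma Nmat_X: "n > 0 \<Longrightarrow> Nmat (X n e k) = AM n e k (cj n e k)"
  by (simp add: Nmat_def AM_def X_inverse)

lemma condS_madj1:
  assumes "condS n ms md e k1 k2" "ms dvd 2 * int n" "md dvd 2 * int n"
  shows "condS n ms md e (cj n e k1) (cj n e k2)"
proof -
  from assms have a: "ms dvd (k1 + k2 - (if e then int n else 0))" "md dvd (k1 - k2 - (if e then int n else 0))"
    and c: "ms dvd 2 * int n" "md dvd 2 * int n" by (auto simp: condS_def)
  show ?thesis unfolding condS_def cj_def
    by (cases e; simp; intro conjI;
        (rule lins[OF a(1) a(1) c(1)] lins[OF a(2) a(2) c(2)]; (simp add: algebra_simps; fail)))
qed

lemma condS_madj2:
  assumes "condS n ms md e k1 k2" "ms dvd 2 * int n" "md dvd 2 * int n"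
  shows "condS n ms md e (cj n e k2) (cj n e k1)"
proof -
  from assms have a: "ms dvd (k1 + k2 - (if e then int n else 0))" "md dvd (k1 - k2 - (if e then int n else 0))"
    and c: "ms dvd 2 * int n" "md dvd 2 * int n" by (auto simp: condS_def)
  show ?thesis unfolding condS_def cj_def
    by (cases e; simp; intro conjI;
        (rule lins[OF a(1) a(1) c(1)] lins[OF a(2) a(2) c(2)]; (simp add: algebra_simps; fail)))
qed

lemma SS_madj:
  assumes "n > 0" "ms dvd 2 * int n" "md dvd 2 * int n" "g \<in> SS n ms md"
  shows "madj g \<in> SS n ms md"
proof -
  from assms(4) obtain e k1 k2 where g: "g = DM n e k1 k2 \<or> g = AM n e k1 k2" "condS n ms md e k1 k2"
    by (auto simp: SS_def)
  have c1: "condS n ms md e (cj n e k1) (cj n e k2)" by (rule condS_madj1[OF g(2) assms(2,3)])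
  have c2: "condS n ms md e (cj n e k2) (cj n e k1)" by (rule condS_madj2[OF g(2) assms(2,3)])
  from g(1) show ?thesis
  proof
    assume "g = DM n e k1 k2"
    then show ?thesis using c1 madj_DM[OF assms(1), of e k1 k2] unfolding SS_def by blast
  next
    assume "g = AM n e k1 k2"
    then show ?thesis using c2 madj_AM[OF assms(1), of e k1 k2] unfolding SS_def by blast
  qed
qed

lemma mI_SS: "mI \<in> SS n ms md"
proof -
  have "condS n ms md False 0 0" by (simp add: condS_def)
  then show ?thesis unfolding SS_def mI_DM[of n] by blast
qed

lemma gen_grp_SS:
  assumes "n > 0" "ms dvd 2 * int n" "md dvd 2 * int n" "S \<subseteq> SS n ms md"
  shows "gen_grp S \<subseteq> SS n ms md"
proof
  fix g assume "g \<in> gen_grp S"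
  then show "g \<in> SS n ms md"
  proof (induction g rule: gen_grp.induct)
    case gen_one then show ?case by (rule mI_SS)
  next
    case (gen_mul g s) then show ?case using assms(4) SS_mult[OF assms(1,2,3)] by blast
  next
    case (gen_inv g s) then show ?case using assms(4) SS_mult[OF assms(1,2,3)] SS_madj[OF assms(1,2,3)] by blast
  qed
qed


locale idx =
  fixes n a b r t :: nat
  assumes n2: "2 \<le> n" and a1: "1 \<le> a" and ab: "a \<le> b" and adv: "a dvd n" and bdv: "b dvd n"
    and cop: "coprime a b" and t12: "t = 1 \<or> (t = 2 \<and> odd (a * b))" and rab: "r * (a * b) = t * n"
begin

lemma npos: "n > 0" using n2 by simp
lemma tpos: "t > 0" using t12 by auto
lemma bpos: "b > 0" using a1 ab by simp
lemma r_pos: "r > 0"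
proof -
  have "t * n > 0" using tpos npos by simp
  then show ?thesis using rab by (metis mult_0 neq0_conv)
qed

definition q :: nat where "q = 2 * a * b div t"

lemma qt: "q * t = 2 * a * b"
  using t12 by (auto simp: q_def elim!: oddE)

lemma qr: "q * r = 2 * n"
proof -
  have "q * r * t = 2 * (r * (a * b))" using qt by (simp add: algebra_simps)
  also have "\<dots> = 2 * n * t" using rab by simp
  finally show ?thesis using tpos by simp
qed

lemma q_pos: "q > 0" using qr npos by (metis mult_eq_0_iff neq0_conv zero_less_numeral mult_pos_pos nat_0_less_mult_iff)

lemma q_eq: "2 * n div r = q" using qr r_pos by (metis nonzero_mult_div_cancel_right less_not_refl2)

definition ms :: int where "ms = int (2 * b div t)"
definition md :: int where "md = int (2 * a div t)"

lemma odd_ab: "t = 2 \<Longrightarrow> odd a \<and> odd b" using t12 by auto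

lemma ms_cases: "ms = (if t = 1 then 2 * int b else int b)"
  using t12 by (auto simp: ms_def)
lemma md_cases: "md = (if t = 1 then 2 * int a else int a)"
  using t12 by (auto simp: md_def)
lemma int_q: "int q * int t = 2 * int a * int b"
  using qt by (metis of_nat_mult of_nat_numeral)
lemma q_cases: "int q = (if t = 1 then 2 * int a * int b else int a * int b)"
  using int_q t12 by auto

lemma bdv': "int b dvd int n" using bdv by simp
lemma adv': "int a dvd int n" using adv by simp

lemma ms_2n: "ms dvd 2 * int n"
  unfolding ms_cases using bdv' by (simp add: dvd_mult)
lemma md_2n: "md dvd 2 * int n"
  unfolding md_cases using adv' by (simp add: dvd_mult)
lemma ms_2b: "ms dvd 2 * int b"
  unfolding ms_cases by simp
lemma md_2a: "md dvd 2 * int a"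
  unfolding md_cases by simp
lemma ms_q: "ms dvd int q"
  unfolding ms_cases q_cases by simp
lemma md_q: "md dvd int q"
  unfolding md_cases q_cases by simp

lemma cop_int: "coprime (int a) (int b)" using cop by simp

lemma q_dvd: "ms dvd x \<Longrightarrow> md dvd x \<Longrightarrow> int q dvd x"
proof -
  assume h: "ms dvd x" "md dvd x"
  show ?thesis
  proof (cases "t = 1")
    case t: True
    have "ms = 2 * int b" "md = 2 * int a" unfolding ms_cases md_cases using t by simp_all
    then have h2: "2 * int a dvd x" "2 * int b dvd x" using h by simp_all
    then obtain y where y: "x = 2 * y" by (metis dvd_mult_left dvd_def)
    with h2 have "int a dvd y" "int b dvd y" by simp_all
    then have "int a * int b dvd y" using cop_int divides_mult by blast
    moreover have "int q = 2 * int a * int b" unfolding q_cases using t by simp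
    ultimately show ?thesis using y by simp
  next
    case t: False
    have "ms = int b" "md = int a" unfolding ms_cases md_cases using t by simp_all
    then have "int a dvd x" "int b dvd x" using h by simp_all
    then have "int a * int b dvd x" using cop_int divides_mult by blast
    moreover have "int q = int a * int b" unfolding q_cases using t by simp
    ultimately show ?thesis by simp
  qed
qed

lemma a_dvd: "md dvd 2 * x \<Longrightarrow> int a dvd x"
proof -
  assume h: "md dvd 2 * x"
  from t12 show ?thesis
  proof
    assume "t = 1" then have "md = 2 * int a" unfolding md_cases by simp
    then show ?thesis using h by simp
  next
    assume t: "t = 2 \<and> odd (a * b)"
    then have "md = int a" unfolding md_cases by simp
    then have "int a dvd 2 * x" using h by simp
    moreover have "coprime (int a) 2" using t by simp
    ultimately show ?thesis by (metis coprime_dvd_mult_right_iff)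
  qed
qed

lemma b_dvd: "ms dvd 2 * x \<Longrightarrow> int b dvd x"
proof -
  assume h: "ms dvd 2 * x"
  from t12 show ?thesis
  proof
    assume "t = 1" then have "ms = 2 * int b" unfolding ms_cases by simp
    then show ?thesis using h by simp
  next
    assume t: "t = 2 \<and> odd (a * b)"
    then have "ms = int b" unfolding ms_cases by simp
    then have "int b dvd 2 * x" using h by simp
    moreover have "coprime (int b) 2" using t by simp
    ultimately show ?thesis by (metis coprime_dvd_mult_right_iff)
  qed
qed

definition G :: "m2 set" where "G = Ggrp n a b r"

lemma gens_enc: "{M2 (omega n ^ (2 * n div r)) 0 0 1} \<union> Nmat ` {1, omega n ^ a, quat_j, omega n ^ b * quat_j}
   = {DM n False (int q) 0, AM n False 0 0, AM n False (int a) (- int a), AM n True 0 (int n), AM n True (int b) (int b + int n)}"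
proof -
  have "M2 (omega n ^ (2 * n div r)) 0 0 1 = DM n False (int q) 0"
    by (simp add: q_eq omega_pow DM_def X_def)
  moreover have "Nmat 1 = AM n False 0 0"
    using Nmat_X[OF npos, of False 0] by (simp add: X_def cj_def)
  moreover have "Nmat (omega n ^ a) = AM n False (int a) (- int a)"
    using Nmat_X[OF npos, of False "int a"] by (simp add: X_def cj_def omega_pow)
  moreover have "Nmat quat_j = AM n True 0 (int n)"
    using Nmat_X[OF npos, of True 0] by (simp add: X_def cj_def WJ_zero)
  moreover have "Nmat (omega n ^ b * quat_j) = AM n True (int b) (int b + int n)"
    using Nmat_X[OF npos, of True "int b"] W_WJ[of n "int b" 0] by (simp add: X_def cj_def omega_pow WJ_zero)
  ultimately show ?thesis by auto
qed

lemma G_def2: "G = gen_grp {DM n False (int q) 0, AM n False 0 0, AM n False (int a) (- int a), AM n True 0 (int n), AM n True (int b) (int b + int n)}"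
  unfolding G_def Ggrp_def gens_enc ..

lemma G_SS: "G \<subseteq> SS n ms md"
  unfolding G_def2
proof (rule gen_grp_SS[OF npos ms_2n md_2n])
  have "condS n ms md False (int q) 0" using ms_q md_q by (simp add: condS_def)
  moreover have "condS n ms md False 0 0" by (simp add: condS_def)
  moreover have "condS n ms md False (int a) (- int a)" using md_2a by (simp add: condS_def)
  moreover have "condS n ms md True 0 (int n)" using md_2n by (simp add: condS_def)
  moreover have "condS n ms md True (int b) (int b + int n)" using ms_2b md_2n by (simp add: condS_def)
  ultimately show "{DM n False (int q) 0, AM n False 0 0, AM n False (int a) (- int a), AM n True 0 (int n), AM n True (int b) (int b + int n)} \<subseteq> SS n ms md"
    unfolding SS_def by blast
qed

lemma G_mult: "g \<in> G \<Longrightarrow> h \<in> G \<Longrightarrow> mmul g h \<in> G"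
  unfolding G_def Ggrp_def by (rule gen_grp_mult)

lemma gen_in_G:
  "DM n False (int q) 0 \<in> G" "AM n False 0 0 \<in> G" "AM n False (int a) (- int a) \<in> G"
  "AM n True 0 (int n) \<in> G" "AM n True (int b) (int b + int n) \<in> G"
  unfolding G_def2 by (auto intro: gen_grp_gen)


section \<open>Reflections of G\<close>

definition P :: nat where "P = 2 * n div a"
definition Q :: nat where "Q = 2 * n div b"

lemma aP: "a * P = 2 * n" using adv unfolding P_def by (metis dvd_mult dvd_mult_div_cancel)
lemma bQ: "b * Q = 2 * n" using bdv unfolding Q_def by (metis dvd_mult dvd_mult_div_cancel)
lemma P_pos: "P > 0" using aP npos by (cases P) auto
lemma Q_pos: "Q > 0" using bQ npos by (cases Q) auto

definition F1 :: "m2 set" where "F1 = (\<lambda>s. DM n False (int q * int s) 0) ` {1..<r}"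
definition F2 :: "m2 set" where "F2 = (\<lambda>s. DM n False 0 (int q * int s)) ` {1..<r}"
definition F3 :: "m2 set" where "F3 = (\<lambda>s. AM n False (int a * int s) (- (int a * int s))) ` {..<P}"
definition F4 :: "m2 set" where "F4 = (\<lambda>s. AM n True (int b * int s) (int b * int s + int n)) ` {..<Q}"

definition RG :: "m2 set" where "RG = {g \<in> G. is_reflection g}"

lemma mod_red:
  assumes "(d::int) * p = N"
  shows "N dvd d * c - d * (c mod p)"
proof -
  have "d * c - d * (c mod p) = d * p * (c div p)"
    by (metis add_diff_cancel_right' div_mult_mod_eq mult.assoc mult.commute right_diff_distrib)
  then show ?thesis using assms by simp
qed

lemma int_2n_q: "int q * int r = 2 * int n" using qr by (metis of_nat_mult of_nat_numeral)
lemma int_2n_a: "int a * int P = 2 * int n" using aP by (metis of_nat_mult of_nat_numeral)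
lemma int_2n_b: "int b * int Q = 2 * int n" using bQ by (metis of_nat_mult of_nat_numeral)

lemma DM_F1_in: "DM n False (int q * int s) 0 \<in> G"
proof -
  have "mpow (DM n False (int q) 0) s = DM n False (int q * int s) 0"
    by (simp add: mpow_DM_F mult.commute)
  then show ?thesis using mpow_in[of _ "{DM n False (int q) 0, AM n False 0 0, AM n False (int a) (- int a), AM n True 0 (int n), AM n True (int b) (int b + int n)}"] gen_in_G(1)
    unfolding G_def2 by metis
qed

lemma DM_F2_in: "DM n False 0 (int q * int s) \<in> G"
proof -
  have "mmul (AM n False 0 0) (mmul (DM n False (int q * int s) 0) (AM n False 0 0)) = DM n False 0 (int q * int s)"
    by (simp add: mmul_enc npos xe_def)
  moreover have "mmul (AM n False 0 0) (mmul (DM n False (int q * int s) 0) (AM n False 0 0)) \<in> G"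
    using gen_in_G(2) DM_F1_in G_mult by blast
  ultimately show ?thesis by simp
qed

lemma AM_F3_step:
  assumes "AM n False x (- x) \<in> G" "AM n False y (- y) \<in> G"
  shows "AM n False (2 * x - y) (- (2 * x - y)) \<in> G"
proof -
  have "mmul (AM n False x (- x)) (mmul (AM n False y (- y)) (AM n False x (- x))) = AM n False (2 * x - y) (- (2 * x - y))"
    by (simp add: mmul_enc npos xe_def algebra_simps)
  then show ?thesis using assms G_mult by metis
qed

lemma AM_F3_in: "AM n False (int a * int s) (- (int a * int s)) \<in> G"
proof -
  have "AM n False (int a * int s) (- (int a * int s)) \<in> G \<and> AM n False (int a * int (Suc s)) (- (int a * int (Suc s))) \<in> G"
  proof (induction s)
    case 0 then show ?case using gen_in_G(2,3) by simp
  next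
    case (Suc s)
    then have "AM n False (2 * (int a * int (Suc s)) - int a * int s) (- (2 * (int a * int (Suc s)) - int a * int s)) \<in> G"
      using AM_F3_step by blast
    moreover have eq: "2 * (int a * int (Suc s)) - int a * int s = int a * int (Suc (Suc s))" by (simp add: algebra_simps)
    ultimately have "AM n False (int a * int (Suc (Suc s))) (- (int a * int (Suc (Suc s)))) \<in> G"
      by (simp only: eq)
    then show ?case using Suc by blast
  qed
  then show ?thesis by simp
qed

lemma AM_F4_step:
  assumes "AM n True x (x + int n) \<in> G" "AM n True y (y + int n) \<in> G"
  shows "AM n True (2 * x - y) (2 * x - y + int n) \<in> G"
proof -
  have "mmul (AM n True x (x + int n)) (mmul (AM n True y (y + int n)) (AM n True x (x + int n))) = AM n True (2 * x - y - 2 * int n) (2 * x - y + int n)"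
    by (simp add: mmul_enc npos xe_def algebra_simps)
  also have "\<dots> = AM n True (2 * x - y) (2 * x - y + int n)"
    by (simp add: AM_eq_iff npos)
  finally show ?thesis using assms G_mult by metis
qed

lemma AM_F4_in: "AM n True (int b * int s) (int b * int s + int n) \<in> G"
proof -
  have "AM n True (int b * int s) (int b * int s + int n) \<in> G \<and> AM n True (int b * int (Suc s)) (int b * int (Suc s) + int n) \<in> G"
  proof (induction s)
    case 0 then show ?case using gen_in_G(4,5) by simp
  next
    case (Suc s)
    then have "AM n True (2 * (int b * int (Suc s)) - int b * int s) (2 * (int b * int (Suc s)) - int b * int s + int n) \<in> G"
      using AM_F4_step by blast
    moreover have eq: "2 * (int b * int (Suc s)) - int b * int s = int b * int (Suc (Suc s))" by (simp add: algebra_simps)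
    ultimately have "AM n True (int b * int (Suc (Suc s))) (int b * int (Suc (Suc s)) + int n) \<in> G"
      by (simp only: eq)
    then show ?case using Suc by blast
  qed
  then show ?thesis by simp
qed

lemma not_dvd_qs: "0 < s \<Longrightarrow> s < r \<Longrightarrow> \<not> (2 * int n) dvd (int q * int s)"
proof
  assume h: "0 < s" "s < r" "(2 * int n) dvd (int q * int s)"
  then have "int q * int r dvd int q * int s" using int_2n_q by simp
  then have "int r dvd int s" using q_pos by simp
  then have "r dvd s" by simp
  then show False using h by (auto dest: dvd_imp_le)
qed

lemma F_sub_RG: "F1 \<union> F2 \<union> F3 \<union> F4 \<subseteq> RG"
proof -
  have "F1 \<subseteq> RG" unfolding F1_def RG_def using DM_F1_in not_dvd_qs by (auto simp: refl_DM npos)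
  moreover have "F2 \<subseteq> RG" unfolding F2_def RG_def using DM_F2_in not_dvd_qs by (auto simp: refl_DM npos)
  moreover have "F3 \<subseteq> RG" unfolding F3_def RG_def using AM_F3_in by (auto simp: refl_AM npos)
  moreover have "F4 \<subseteq> RG" unfolding F4_def RG_def using AM_F4_in by (auto simp: refl_AM npos)
  ultimately show ?thesis by blast
qed


lemma SS_refl:
  assumes "g \<in> SS n ms md" "is_reflection g"
  shows "g \<in> F1 \<union> F2 \<union> F3 \<union> F4"
proof -
  have N: "2 * int n \<noteq> 0" using npos by simp
  from assms(1) obtain e k1 k2 where g: "g = DM n e k1 k2 \<or> g = AM n e k1 k2" "condS n ms md e k1 k2"
    by (auto simp: SS_def)
  from g(1) show ?thesis
  proof
    assume gd: "g = DM n e k1 k2"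
    with assms(2) have ne: "\<not> e" and r1: "\<not> (2 * int n) dvd k1 \<or> \<not> (2 * int n) dvd k2"
      and r2: "(2 * int n) dvd k1 \<or> (2 * int n) dvd k2" by (auto simp: refl_DM npos)
    with g(2) have c: "ms dvd k1 + k2" "md dvd k1 - k2" by (auto simp: condS_def)
    from r2 show ?thesis
    proof
      assume k1: "(2 * int n) dvd k1"
      then have "ms dvd k1" "md dvd k1" using ms_2n md_2n dvd_trans by blast+
      then have "ms dvd k2" "md dvd k2" using dvd_diff[OF c(1) \<open>ms dvd k1\<close>] dvd_diff[OF \<open>md dvd k1\<close> c(2)] by simp_all
      then have "int q dvd k2" by (rule q_dvd)
      then obtain c' where k2: "k2 = int q * c'" by (auto simp: dvd_def)
      define s where "s = nat (c' mod int r)"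
      have s: "int s = c' mod int r" using r_pos by (simp add: s_def)
      have sr: "s < r" proof -
        have "c' mod int r < int r" using r_pos by simp
        then show ?thesis using s by linarith
      qed
      have d: "(2 * int n) dvd k2 - int q * int s" unfolding k2 s by (rule mod_red[OF int_2n_q])
      have nd: "\<not> (2 * int n) dvd k2" using r1 k1 by blast
      have "s \<noteq> 0"
      proof
        assume "s = 0" with d have "(2 * int n) dvd k2" by simp
        with nd show False by simp
      qed
      have "g = DM n False 0 (int q * int s)"
        unfolding gd using ne k1 d by (simp add: DM_eq_iff npos)
      then show ?thesis using sr \<open>s \<noteq> 0\<close> unfolding F2_def by auto
    next
      assume k2: "(2 * int n) dvd k2"
      then have "ms dvd k2" "md dvd k2" using ms_2n md_2n dvd_trans by blast+
      then have "ms dvd k1" "md dvd k1" using dvd_diff[OF c(1) \<open>ms dvd k2\<close>] dvd_add[OF c(2) \<open>md dvd k2\<close>] by simp_all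
      then have "int q dvd k1" by (rule q_dvd)
      then obtain c' where k1: "k1 = int q * c'" by (auto simp: dvd_def)
      define s where "s = nat (c' mod int r)"
      have s: "int s = c' mod int r" using r_pos by (simp add: s_def)
      have sr: "s < r" proof -
        have "c' mod int r < int r" using r_pos by simp
        then show ?thesis using s by linarith
      qed
      have d: "(2 * int n) dvd k1 - int q * int s" unfolding k1 s by (rule mod_red[OF int_2n_q])
      have nd: "\<not> (2 * int n) dvd k1" using r1 k2 by blast
      have "s \<noteq> 0"
      proof
        assume "s = 0" with d have "(2 * int n) dvd k1" by simp
        with nd show False by simp
      qed
      have "g = DM n False (int q * int s) 0"
        unfolding gd using ne k2 d by (simp add: DM_eq_iff npos)
      then show ?thesis using sr \<open>s \<noteq> 0\<close> unfolding F1_def by auto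
    qed
  next
    assume ga: "g = AM n e k1 k2"
    show ?thesis
    proof (cases e)
      case False
      with assms(2) ga have r: "(2 * int n) dvd k1 + k2" by (simp add: refl_AM npos)
      from g(2) False have c: "md dvd k1 - k2" by (simp add: condS_def)
      have "md dvd k1 + k2" using r md_2n dvd_trans by blast
      then have "md dvd 2 * k1" using dvd_add[OF _ c] by (metis add.commute diff_add_eq mult_2 add_diff_cancel_left' add_diff_eq)
      then have "int a dvd k1" by (rule a_dvd)
      then obtain c' where k1: "k1 = int a * c'" by (auto simp: dvd_def)
      define s where "s = nat (c' mod int P)"
      have s: "int s = c' mod int P" using P_pos by (simp add: s_def)
      have sr: "s < P" proof -
        have "c' mod int P < int P" using P_pos by simp
        then show ?thesis using s by linarith
      qed
      have d: "(2 * int n) dvd k1 - int a * int s" unfolding k1 s by (rule mod_red[OF int_2n_a])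
      have d2: "(2 * int n) dvd k2 - (- (int a * int s))"
        using dvd_diff[OF r d] by (simp add: algebra_simps)
      have "g = AM n False (int a * int s) (- (int a * int s))"
        unfolding ga using False d d2 by (simp add: AM_eq_iff npos)
      then show ?thesis using sr unfolding F3_def by auto
    next
      case True
      with assms(2) ga have r: "(2 * int n) dvd k2 - k1 + int n" by (simp add: refl_AM npos)
      from g(2) True have c: "ms dvd k1 + k2 - int n" by (simp add: condS_def)
      have m1: "ms dvd k2 - k1 + int n" using r ms_2n dvd_trans by blast
      have "ms dvd (k1 + k2 - int n) - (k2 - k1 + int n) + 2 * int n" by (rule dvd_add[OF dvd_diff[OF c m1] ms_2n])
      moreover have "(k1 + k2 - int n) - (k2 - k1 + int n) + 2 * int n = 2 * k1" by simp
      ultimately have "ms dvd 2 * k1" by simp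
      then have "int b dvd k1" by (rule b_dvd)
      then obtain c' where k1: "k1 = int b * c'" by (auto simp: dvd_def)
      define s where "s = nat (c' mod int Q)"
      have s: "int s = c' mod int Q" using Q_pos by (simp add: s_def)
      have sr: "s < Q" proof -
        have "c' mod int Q < int Q" using Q_pos by simp
        then show ?thesis using s by linarith
      qed
      have d: "(2 * int n) dvd k1 - int b * int s" unfolding k1 s by (rule mod_red[OF int_2n_b])
      have d2: "(2 * int n) dvd k2 - (int b * int s + int n)"
      proof -
        have "(2 * int n) dvd (k2 - k1 + int n) + (k1 - int b * int s) - 2 * int n"
          by (rule dvd_diff[OF dvd_add[OF r d] dvd_refl])
        then show ?thesis by (simp add: algebra_simps)
      qed
      have "g = AM n True (int b * int s) (int b * int s + int n)"
        unfolding ga using True d d2 by (simp add: AM_eq_iff npos)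
      then show ?thesis using sr unfolding F4_def by auto
    qed
  qed
qed

lemma RG_eq: "RG = F1 \<union> F2 \<union> F3 \<union> F4"
  using F_sub_RG SS_refl G_SS unfolding RG_def by blast

lemma inj_F1: "inj_on (\<lambda>s. DM n False (int q * int s) 0) {1..<r}"
proof (rule inj_onI)
  fix x y assume h: "x \<in> {1..<r}" "y \<in> {1..<r}" "DM n False (int q * int x) 0 = DM n False (int q * int y) 0"
  then have "int q * int r dvd int q * (int x - int y)" using int_2n_q by (simp add: DM_eq_iff npos algebra_simps)
  then have "int r dvd int x - int y" using q_pos by simp
  then have "int x mod int r = int y mod int r" by (simp add: mod_eq_dvd_iff)
  then show "x = y" using h by (simp add: zmod_int[symmetric])
qed

lemma inj_F2: "inj_on (\<lambda>s. DM n False 0 (int q * int s)) {1..<r}"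
proof (rule inj_onI)
  fix x y assume h: "x \<in> {1..<r}" "y \<in> {1..<r}" "DM n False 0 (int q * int x) = DM n False 0 (int q * int y)"
  then have "int q * int r dvd int q * (int x - int y)" using int_2n_q by (simp add: DM_eq_iff npos algebra_simps)
  then have "int r dvd int x - int y" using q_pos by simp
  then have "int x mod int r = int y mod int r" by (simp add: mod_eq_dvd_iff)
  then show "x = y" using h by (simp add: zmod_int[symmetric])
qed

lemma inj_F3: "inj_on (\<lambda>s. AM n False (int a * int s) (- (int a * int s))) {..<P}"
proof (rule inj_onI)
  fix x y assume h: "x \<in> {..<P}" "y \<in> {..<P}" "AM n False (int a * int x) (- (int a * int x)) = AM n False (int a * int y) (- (int a * int y))"
  then have "int a * int P dvd int a * (int x - int y)" using int_2n_a by (simp add: AM_eq_iff npos algebra_simps)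
  then have "int P dvd int x - int y" using a1 by simp
  then have "int x mod int P = int y mod int P" by (simp add: mod_eq_dvd_iff)
  then show "x = y" using h by (simp add: zmod_int[symmetric])
qed

lemma inj_F4: "inj_on (\<lambda>s. AM n True (int b * int s) (int b * int s + int n)) {..<Q}"
proof (rule inj_onI)
  fix x y assume h: "x \<in> {..<Q}" "y \<in> {..<Q}" "AM n True (int b * int x) (int b * int x + int n) = AM n True (int b * int y) (int b * int y + int n)"
  then have "int b * int Q dvd int b * (int x - int y)" using int_2n_b by (simp add: AM_eq_iff npos algebra_simps)
  then have "int Q dvd int x - int y" using bpos by simp
  then have "int x mod int Q = int y mod int Q" by (simp add: mod_eq_dvd_iff)
  then show "x = y" using h by (simp add: zmod_int[symmetric])
qed

lemma card_RG: "card RG = 2 * (r - 1) + P + Q"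
proof -
  have c1: "card F1 = r - 1" unfolding F1_def using inj_F1 by (simp add: card_image)
  have c2: "card F2 = r - 1" unfolding F2_def using inj_F2 by (simp add: card_image)
  have c3: "card F3 = P" unfolding F3_def using inj_F3 by (simp add: card_image)
  have c4: "card F4 = Q" unfolding F4_def using inj_F4 by (simp add: card_image)
  have f: "finite F1" "finite F2" "finite F3" "finite F4" unfolding F1_def F2_def F3_def F4_def by auto
  have d12: "F1 \<inter> F2 = {}"
  proof -
    { fix x y assume h: "x \<in> {1..<r}" "y \<in> {1..<r}" "DM n False (int q * int x) 0 = DM n False 0 (int q * int y)"
      then have "(2 * int n) dvd (int q * int x)" by (simp add: DM_eq_iff npos)
      then have False using h not_dvd_qs by auto }
    then show ?thesis unfolding F1_def F2_def by blast
  qed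
  have d3: "(F1 \<union> F2) \<inter> F3 = {}" unfolding F1_def F2_def F3_def by (auto simp: DM_neq_AM DM_neq_AM[symmetric])
  have d4: "(F1 \<union> F2 \<union> F3) \<inter> F4 = {}" unfolding F1_def F2_def F3_def F4_def by (auto simp: DM_neq_AM DM_neq_AM[symmetric] AM_eq_iff npos)
  have "card (F1 \<union> F2 \<union> F3 \<union> F4) = card (F1 \<union> F2 \<union> F3) + card F4"
    using d4 f by (simp add: card_Un_disjoint)
  also have "card (F1 \<union> F2 \<union> F3) = card (F1 \<union> F2) + card F3"
    using d3 f by (simp add: card_Un_disjoint)
  also have "card (F1 \<union> F2) = card F1 + card F2"
    using d12 f by (simp add: card_Un_disjoint)
  finally show ?thesis unfolding RG_eq using c1 c2 c3 c4 by simp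
qed

end


lemma mpow_2: "mpow x 2 = mmul x x"
  by (simp add: numeral_2_eq_2)

lemma mpow_DM_F_mI:
  assumes "n > 0" "(2 * int n) dvd int m * u" "(2 * int n) dvd int m * v"
  shows "mpow (DM n False u v) m = mI"
  using assms by (simp add: mpow_DM_F DM_eq_mI)

lemma mpow_AM_F_mI:
  assumes "n > 0" "(2 * int n) dvd int m * (u + v)"
  shows "mpow (AM n False u v) (2 * m) = mI"
proof -
  have "mpow (AM n False u v) 2 = DM n False (u + v) (v + u)"
    using assms(1) by (simp add: mpow_2 mmul_enc xe_def)
  then show ?thesis using assms by (simp add: mpow_mult mpow_DM_F_mI add.commute)
qed

lemma mpow_AM_T_mI:
  assumes "n > 0" "(2 * int n) dvd int m * (u - v + int n)" "(2 * int n) dvd int m * (v - u + int n)"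
  shows "mpow (AM n True u v) (2 * m) = mI"
proof -
  have "mpow (AM n True u v) 2 = DM n False (u - v + int n) (v - u + int n)"
    using assms(1) by (simp add: mpow_2 mmul_enc xe_def)
  then show ?thesis using assms by (simp add: mpow_mult mpow_DM_F_mI)
qed

lemma mpow_DM_T_mI:
  assumes "n > 0"
  shows "mpow (DM n True u v) 4 = mI"
proof -
  have "mpow (DM n True u v) 2 = DM n False (int n) (int n)"
    using assms(1) by (simp add: mpow_2 mmul_enc xe_def)
  moreover have "(4::nat) = 2 * 2" by simp
  ultimately show ?thesis using assms by (simp add: mpow_mult[of _ 2 2, simplified] mpow_DM_F_mI)
qed

definition has_ord :: "m2 \<Rightarrow> nat \<Rightarrow> bool" where
  "has_ord x k \<longleftrightarrow> 0 < k \<and> mpow x k = mI \<and> (\<forall>j. 0 < j \<and> j < k \<longrightarrow> mpow x j \<noteq> mI)"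

context idx
begin

definition bnd :: "m2 \<Rightarrow> bool" where
  "bnd x \<longleftrightarrow> mpow x (2 * r) = mI \<or> mpow x P = mI \<or> mpow x Q = mI \<or> mpow x 4 = mI"

definition DQ :: "m2 set" where "DQ = {DM n False (int q * i1) (int q * i2) |i1 i2. True}"
definition A3 :: "m2 set" where "A3 = {AM n False (int a * j) (- (int a * j)) |j. True}"
definition A4 :: "m2 set" where "A4 = {AM n True (int b * j) (int b * j + int n) |j. True}"

lemma RG_sub: "RG \<subseteq> DQ \<union> A3 \<union> A4"
proof -
  have "F1 \<subseteq> DQ" unfolding F1_def DQ_def by (auto, metis mult_zero_right)
  moreover have "F2 \<subseteq> DQ" unfolding F2_def DQ_def by (auto, metis mult_zero_right)
  moreover have "F3 \<subseteq> A3" unfolding F3_def A3_def by auto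
  moreover have "F4 \<subseteq> A4" unfolding F4_def A4_def by auto
  ultimately show ?thesis unfolding RG_eq by blast
qed

lemma rq: "int r * (int q * x) = 2 * int n * x" using int_2n_q by (simp add: algebra_simps)
lemma rq2: "int r * int q = 2 * int n" "int q * int r = 2 * int n" using int_2n_q by (simp_all add: algebra_simps)
lemma aP2: "int a * int P = 2 * int n" "int P * int a = 2 * int n" using int_2n_a by (simp_all add: algebra_simps)
lemma bQ2: "int b * int Q = 2 * int n" "int Q * int b = 2 * int n" using int_2n_b by (simp_all add: algebra_simps)

lemma bnd_DQ_DQ: "bnd (mmul (DM n False (int q * i1) (int q * i2)) (DM n False (int q * j1) (int q * j2)))"
proof -
  have "mpow (DM n False (int q * i1 + int q * j1) (int q * i2 + int q * j2)) (2 * r) = mI"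
    using npos by (intro mpow_DM_F_mI) (simp_all add: algebra_simps rq2)
  then show ?thesis unfolding bnd_def by (simp add: mmul_enc npos xe_def)
qed

lemma bnd_DQ_A3: "bnd (mmul (DM n False (int q * i1) (int q * i2)) (AM n False (int a * j) (- (int a * j))))"
proof -
  have "mpow (AM n False (int q * i1 + int a * j) (int q * i2 + - (int a * j))) (2 * r) = mI"
    using npos by (intro mpow_AM_F_mI) (simp_all add: algebra_simps rq2)
  then show ?thesis unfolding bnd_def by (simp add: mmul_enc npos xe_def)
qed

lemma bnd_DQ_A4: "bnd (mmul (DM n False (int q * i1) (int q * i2)) (AM n True (int b * j) (int b * j + int n)))"
proof -
  have "mpow (AM n True (int q * i1 + int b * j) (int q * i2 + (int b * j + int n))) (2 * r) = mI"
    using npos by (intro mpow_AM_T_mI) (simp_all add: algebra_simps rq2)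
  then show ?thesis unfolding bnd_def by (simp add: mmul_enc npos xe_def)
qed

lemma bnd_A3_DQ: "bnd (mmul (AM n False (int a * j) (- (int a * j))) (DM n False (int q * i1) (int q * i2)))"
proof -
  have "mpow (AM n False (int a * j + int q * i2) (- (int a * j) + int q * i1)) (2 * r) = mI"
    using npos by (intro mpow_AM_F_mI) (simp_all add: algebra_simps rq2)
  then show ?thesis unfolding bnd_def by (simp add: mmul_enc npos xe_def)
qed

lemma bnd_A4_DQ: "bnd (mmul (AM n True (int b * j) (int b * j + int n)) (DM n False (int q * i1) (int q * i2)))"
proof -
  have "mpow (AM n True (int b * j - int q * i2) (int b * j + int n - int q * i1)) (2 * r) = mI"
    using npos by (intro mpow_AM_T_mI) (simp_all add: algebra_simps rq2)
  then show ?thesis unfolding bnd_def by (simp add: mmul_enc npos xe_def)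
qed

lemma bnd_A3_A3: "bnd (mmul (AM n False (int a * i) (- (int a * i))) (AM n False (int a * j) (- (int a * j))))"
proof -
  have "mpow (DM n False (int a * i + - (int a * j)) (- (int a * i) + int a * j)) P = mI"
    using npos by (intro mpow_DM_F_mI) (simp_all add: algebra_simps aP2)
  then show ?thesis unfolding bnd_def by (simp add: mmul_enc npos xe_def)
qed

lemma bnd_A4_A4: "bnd (mmul (AM n True (int b * i) (int b * i + int n)) (AM n True (int b * j) (int b * j + int n)))"
proof -
  have "mpow (DM n False (int b * i - (int b * j + int n) + int n) (int b * i + int n - int b * j + int n)) Q = mI"
    using npos by (intro mpow_DM_F_mI) (simp_all add: algebra_simps bQ2)
  then show ?thesis unfolding bnd_def by (simp add: mmul_enc npos xe_def)
qed

lemma bnd_A3_A4: "bnd (mmul (AM n False (int a * i) (- (int a * i))) (AM n True (int b * j) (int b * j + int n)))"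
  unfolding bnd_def by (simp add: mmul_enc npos mpow_DM_T_mI)

lemma bnd_A4_A3: "bnd (mmul (AM n True (int b * j) (int b * j + int n)) (AM n False (int a * i) (- (int a * i))))"
  unfolding bnd_def by (simp add: mmul_enc npos mpow_DM_T_mI)

lemma bnd_RG: "x \<in> RG \<Longrightarrow> y \<in> RG \<Longrightarrow> bnd (mmul x y)"
  using RG_sub unfolding DQ_def A3_def A4_def
  by (auto simp del: mmul.simps intro: bnd_DQ_DQ bnd_DQ_A3 bnd_DQ_A4 bnd_A3_DQ bnd_A4_DQ bnd_A3_A3 bnd_A4_A4 bnd_A3_A4 bnd_A4_A3)

section \<open>Orders of reflections\<close>

lemma refl_ord_bnd: "s \<in> RG \<Longrightarrow> mpow s 2 = mI \<or> mpow s r = mI"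
proof -
  assume "s \<in> RG"
  then have "s \<in> DQ \<union> A3 \<union> A4" using RG_sub by blast
  then show ?thesis
  proof (elim UnE)
    assume "s \<in> DQ"
    then obtain i1 i2 where "s = DM n False (int q * i1) (int q * i2)" unfolding DQ_def by blast
    moreover have "mpow (DM n False (int q * i1) (int q * i2)) r = mI"
      using npos by (intro mpow_DM_F_mI) (simp_all add: algebra_simps rq2)
    ultimately show ?thesis by simp
  next
    assume "s \<in> A3"
    then obtain j where "s = AM n False (int a * j) (- (int a * j))" unfolding A3_def by blast
    then show ?thesis by (simp add: mpow_2 mmul_enc npos xe_def mI_DM[of n] DM_eq_iff)
  next
    assume "s \<in> A4"
    then obtain j where "s = AM n True (int b * j) (int b * j + int n)" unfolding A4_def by blast
    then show ?thesis by (simp add: mpow_2 mmul_enc npos xe_def mI_DM[of n] DM_eq_iff)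
  qed
qed


lemma refl_ord_wit: "3 \<le> r \<Longrightarrow> \<exists>s\<in>RG. has_ord s r"
proof -
  assume r3: "3 \<le> r"
  have "DM n False (int q * int 1) 0 \<in> F1" unfolding F1_def using r3 by (intro image_eqI[where x=1]) auto
  then have mem: "DM n False (int q) 0 \<in> RG" unfolding RG_eq by simp
  have "has_ord (DM n False (int q) 0) r"
    unfolding has_ord_def
  proof (intro conjI allI impI)
    show "0 < r" using r_pos .
    show "mpow (DM n False (int q) 0) r = mI"
      using npos by (intro mpow_DM_F_mI) (simp_all add: rq2)
    fix j assume j: "0 < j \<and> j < r"
    then show "mpow (DM n False (int q) 0) j \<noteq> mI"
      using not_dvd_qs[of j] by (simp add: mpow_DM_F DM_eq_mI npos mult.commute)
  qed
  then show ?thesis using mem by blast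
qed

lemma prod_wit_P: "\<exists>x\<in>RG. \<exists>y\<in>RG. has_ord (mmul x y) P"
proof -
  have P2: "2 \<le> P"
  proof -
    have "a \<le> n" using adv npos by (simp add: dvd_imp_le)
    then have "a * 1 < a * P" using aP npos by linarith
    then show ?thesis by (metis Suc_1 Suc_leI mult_less_cancel1 nat_mult_1_right)
  qed
  have "AM n False (int a * int 0) (- (int a * int 0)) \<in> F3" "AM n False (int a * int 1) (- (int a * int 1)) \<in> F3"
    unfolding F3_def using P2 by (intro image_eqI[where x=0], auto, intro image_eqI[where x=1], auto)
  then have m: "AM n False 0 0 \<in> RG" "AM n False (int a) (- int a) \<in> RG" unfolding RG_eq by auto
  have pr: "mmul (AM n False 0 0) (AM n False (int a) (- int a)) = DM n False (- int a) (int a)"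
    by (simp add: mmul_enc npos xe_def)
  have "has_ord (DM n False (- int a) (int a)) P"
    unfolding has_ord_def
  proof (intro conjI allI impI)
    show "0 < P" using P_pos .
    show "mpow (DM n False (- int a) (int a)) P = mI"
      using npos by (intro mpow_DM_F_mI) (simp_all add: aP2)
    fix j assume j: "0 < j \<and> j < P"
    show "mpow (DM n False (- int a) (int a)) j \<noteq> mI"
    proof
      assume "mpow (DM n False (- int a) (int a)) j = mI"
      then have "(2 * int n) dvd int j * int a" by (simp add: mpow_DM_F DM_eq_mI npos)
      then have "int a * int P dvd int a * int j" using aP2 by (simp add: mult.commute)
      then have "P dvd j" using a1 by simp
      then show False using j by (auto dest: dvd_imp_le)
    qed
  qed
  then show ?thesis using m pr by metis
qed

lemma prod_wit_Q: "\<exists>x\<in>RG. \<exists>y\<in>RG. has_ord (mmul x y) Q"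
proof -
  have Q2: "2 \<le> Q"
  proof -
    have "b \<le> n" using bdv npos by (simp add: dvd_imp_le)
    then have "b * 1 < b * Q" using bQ npos by linarith
    then show ?thesis by (metis Suc_1 Suc_leI mult_less_cancel1 nat_mult_1_right)
  qed
  have "AM n True (int b * int 0) (int b * int 0 + int n) \<in> F4" "AM n True (int b * int 1) (int b * int 1 + int n) \<in> F4"
    unfolding F4_def using Q2 by (intro image_eqI[where x=0], auto, intro image_eqI[where x=1], auto)
  then have m: "AM n True 0 (int n) \<in> RG" "AM n True (int b) (int b + int n) \<in> RG" unfolding RG_eq by auto
  have pr: "mmul (AM n True 0 (int n)) (AM n True (int b) (int b + int n)) = DM n False (- int b) (2 * int n - int b)"
    by (simp add: mmul_enc npos xe_def)
  have "has_ord (DM n False (- int b) (2 * int n - int b)) Q"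
    unfolding has_ord_def
  proof (intro conjI allI impI)
    show "0 < Q" using Q_pos .
    show "mpow (DM n False (- int b) (2 * int n - int b)) Q = mI"
      using npos by (intro mpow_DM_F_mI) (simp_all add: bQ2 algebra_simps)
    fix j assume j: "0 < j \<and> j < Q"
    show "mpow (DM n False (- int b) (2 * int n - int b)) j \<noteq> mI"
    proof
      assume "mpow (DM n False (- int b) (2 * int n - int b)) j = mI"
      then have "(2 * int n) dvd int j * int b" by (simp add: mpow_DM_F DM_eq_mI npos)
      then have "int b * int Q dvd int b * int j" using bQ2 by (simp add: mult.commute)
      then have "Q dvd j" using bpos by simp
      then show False using j by (auto dest: dvd_imp_le)
    qed
  qed
  then show ?thesis using m pr by metis
qed

end


lemma iso_mI:
  assumes "refl_iso f G H" "mI \<in> G" "mI \<in> H"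
  shows "f mI = mI"
proof -
  from assms(1) have bij: "bij_betw f G H" and hom: "\<forall>x\<in>G. \<forall>y\<in>G. f (mmul x y) = mmul (f x) (f y)"
    by (auto simp: refl_iso_def)
  from bij assms(3) obtain g where g: "g \<in> G" "f g = mI" by (metis bij_betw_iff_bijections)
  have "f g = mmul (f mI) (f g)" using hom g assms(2) by (metis mmul_mI(1))
  then show ?thesis using g by simp
qed

lemma iso_mpow:
  assumes "refl_iso f G H" "mI \<in> G" "mI \<in> H" "\<forall>x\<in>G. \<forall>y\<in>G. mmul x y \<in> G" "x \<in> G"
  shows "mpow x k \<in> G \<and> f (mpow x k) = mpow (f x) k"
proof (induction k)
  case 0 then show ?case using iso_mI[OF assms(1-3)] assms(2) by simp
next
  case (Suc k)
  have hom: "\<forall>x\<in>G. \<forall>y\<in>G. f (mmul x y) = mmul (f x) (f y)" using assms(1) by (auto simp: refl_iso_def)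
  then show ?case using Suc assms(4,5) by simp
qed

lemma iso_mpow_mI:
  assumes "refl_iso f G H" "mI \<in> G" "mI \<in> H" "\<forall>x\<in>G. \<forall>y\<in>G. mmul x y \<in> G" "x \<in> G"
  shows "mpow (f x) k = mI \<longleftrightarrow> mpow x k = mI"
proof -
  have inj: "inj_on f G" using assms(1) by (auto simp: refl_iso_def bij_betw_def)
  have m: "mpow x k \<in> G" "f (mpow x k) = mpow (f x) k" using iso_mpow[OF assms] by auto
  have fi: "f mI = mI" using iso_mI[OF assms(1-3)] .
  show ?thesis using inj m fi assms(2) by (metis inj_on_eq_iff)
qed

lemma gen_grp_closed: "\<forall>x\<in>gen_grp S. \<forall>y\<in>gen_grp S. mmul x y \<in> gen_grp S"
  using gen_grp_mult by blast

context idx begin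
lemma mI_G: "mI \<in> G" unfolding G_def Ggrp_def by (rule gen_grp.gen_one)
lemma G_closed: "\<forall>x\<in>G. \<forall>y\<in>G. mmul x y \<in> G" using G_mult by blast
lemma RG_G: "RG \<subseteq> G" unfolding RG_def by blast
lemma finite_RG: "finite RG" unfolding RG_eq F1_def F2_def F3_def F4_def by simp
end

lemma has_ord_dvd: "has_ord x k \<Longrightarrow> mpow x u = mI \<Longrightarrow> k dvd u"
  unfolding has_ord_def using mpow_order_dvd by blast

lemma compat:
  assumes I: "idx n a b r t" and I': "idx n' a' b' r' t'"
    and f: "refl_iso f (Ggrp n a b r) (Ggrp n' a' b' r')"
  shows "2 * (r - 1) + idx.P n a + idx.Q n b = 2 * (r' - 1) + idx.P n' a' + idx.Q n' b'"
    and "3 \<le> r' \<Longrightarrow> r' dvd 2 \<or> r' dvd r"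
    and "\<And>w. w = idx.P n' a' \<or> w = idx.Q n' b' \<Longrightarrow> w dvd 2 * r \<or> w dvd idx.P n a \<or> w dvd idx.Q n b \<or> w dvd 4"
    and "3 \<le> r \<Longrightarrow> r dvd 2 \<or> r dvd r'"
    and "\<And>w. w = idx.P n a \<or> w = idx.Q n b \<Longrightarrow> w dvd 2 * r' \<or> w dvd idx.P n' a' \<or> w dvd idx.Q n' b' \<or> w dvd 4"
proof -
  interpret A: idx n a b r t by (rule I)
  interpret B: idx n' a' b' r' t' by (rule I')
  have f': "refl_iso f A.G B.G" using f by (simp add: A.G_def B.G_def)
  have bij: "bij_betw f A.G B.G" using f' by (simp add: refl_iso_def)
  have hom: "\<forall>x\<in>A.G. \<forall>y\<in>A.G. f (mmul x y) = mmul (f x) (f y)" using f' by (simp add: refl_iso_def)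
  have im: "f ` A.RG = B.RG" using f' by (simp add: refl_iso_def A.RG_def B.RG_def)
  have inj: "inj_on f A.RG" using bij A.RG_G by (meson bij_betw_def inj_on_subset)
  have po: "mpow (f x) k = mI \<longleftrightarrow> mpow x k = mI" if "x \<in> A.G" for x k
    by (rule iso_mpow_mI[OF f' A.mI_G B.mI_G A.G_closed that])
  have ho: "has_ord (f x) k \<longleftrightarrow> has_ord x k" if "x \<in> A.G" for x k
    using po[OF that] by (simp add: has_ord_def)
  show "2 * (r - 1) + A.P + A.Q = 2 * (r' - 1) + B.P + B.Q"
    using A.card_RG B.card_RG card_image[OF inj] im by simp
  show "r' dvd 2 \<or> r' dvd r" if r3: "3 \<le> r'"
  proof -
    obtain s' where s': "s' \<in> B.RG" "has_ord s' r'" using B.refl_ord_wit[OF r3] by (elim bexE)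
    from s'(1) have "s' \<in> f ` A.RG" using im by simp
    then obtain s where s: "s \<in> A.RG" "f s = s'" by (elim imageE) simp
    then have sG: "s \<in> A.G" using A.RG_G by blast
    have "has_ord s r'" using ho[OF sG, of r'] s(2) s'(2) by simp
    moreover have "mpow s 2 = mI \<or> mpow s r = mI" using A.refl_ord_bnd s(1) by blast
    ultimately show ?thesis using has_ord_dvd[of s r'] by blast
  qed
  show "r dvd 2 \<or> r dvd r'" if r3: "3 \<le> r"
  proof -
    obtain s where s: "s \<in> A.RG" "has_ord s r" using A.refl_ord_wit[OF r3] by (elim bexE)
    then have sG: "s \<in> A.G" using A.RG_G by blast
    have fs: "f s \<in> B.RG" using s(1) im by blast
    have "has_ord (f s) r" using ho[OF sG, of r] s(2) by simp
    moreover have "mpow (f s) 2 = mI \<or> mpow (f s) r' = mI" using B.refl_ord_bnd fs by blast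
    ultimately show ?thesis using has_ord_dvd[of "f s" r] by blast
  qed
  show "w dvd 2 * r' \<or> w dvd B.P \<or> w dvd B.Q \<or> w dvd 4" if w: "w = A.P \<or> w = A.Q" for w
  proof -
    obtain x y where xy: "x \<in> A.RG" "y \<in> A.RG" "has_ord (mmul x y) w"
      using w A.prod_wit_P A.prod_wit_Q by blast
    then have G: "x \<in> A.G" "y \<in> A.G" using A.RG_G by auto
    have fxy: "f x \<in> B.RG" "f y \<in> B.RG" using xy(1,2) im by blast+
    have "f (mmul x y) = mmul (f x) (f y)" using hom G by simp
    moreover have "mmul x y \<in> A.G" using G A.G_mult by blast
    ultimately have "has_ord (mmul (f x) (f y)) w" using ho[of "mmul x y" w] xy(3) by simp
    moreover have "B.bnd (mmul (f x) (f y))" using B.bnd_RG fxy by blast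
    ultimately show ?thesis unfolding B.bnd_def using has_ord_dvd[of "mmul (f x) (f y)" w] by blast
  qed
  fix w assume w: "w = B.P \<or> w = B.Q"
  obtain x' y' where xy': "x' \<in> B.RG" "y' \<in> B.RG" "has_ord (mmul x' y') w"
    using w B.prod_wit_P B.prod_wit_Q by blast
  from xy'(1,2) have "x' \<in> f ` A.RG" "y' \<in> f ` A.RG" using im by simp_all
  then obtain x y where xy: "x \<in> A.RG" "y \<in> A.RG" "f x = x'" "f y = y'" by (auto elim!: imageE)
  then have G: "x \<in> A.G" "y \<in> A.G" using A.RG_G by auto
  have "f (mmul x y) = mmul x' y'" using hom G xy by simp
  moreover have "mmul x y \<in> A.G" using G A.G_mult by blast
  ultimately have "has_ord (mmul x y) w" using ho[of "mmul x y" w] xy'(3) by simp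
  moreover have "A.bnd (mmul x y)" using A.bnd_RG xy(1,2) by blast
  ultimately show "w dvd 2 * r \<or> w dvd A.P \<or> w dvd A.Q \<or> w dvd 4"
    unfolding A.bnd_def using has_ord_dvd[of "mmul x y" w] by blast
qed


context idx begin

definition g :: nat where "g = 2 * r div t"

lemma gt: "g * t = 2 * r"
  using t12 unfolding g_def by (auto elim!: oddE)  

lemma n_eq: "2 * n = g * a * b"
proof -
  have "2 * n * t = 2 * (r * (a * b))" using rab by simp
  also have "\<dots> = g * a * b * t" using gt by (simp add: algebra_simps)
  finally show ?thesis using tpos by simp
qed

lemma P_eq: "P = g * b"
proof -
  have "a * P = a * (g * b)" using aP n_eq by (simp add: algebra_simps)
  then show ?thesis using a1 by simp
qed

lemma Q_eq: "Q = g * a"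
proof -
  have "b * Q = b * (g * a)" using bQ n_eq by (simp add: algebra_simps)
  then show ?thesis using bpos by simp
qed

lemma g_pos: "g > 0" using P_eq P_pos by simp

lemma g_gcd: "gcd P Q = g"
proof -
  have "gcd P Q = g * gcd b a" unfolding P_eq Q_eq by (simp add: gcd_mult_distrib_nat)
  then show ?thesis using cop by (simp add: coprime_commute[of a b] coprime_iff_gcd_eq_1[symmetric] gcd.commute)
qed

lemma Q_le_P: "Q \<le> P" unfolding P_eq Q_eq using ab by simp

lemma t_r1: "r = 1 \<Longrightarrow> t = 1"
proof (rule ccontr)
  assume "r = 1" "t \<noteq> 1"
  then have "t = 2" "odd (a * b)" using t12 by auto
  with rab \<open>r = 1\<close> have "a * b = 2 * n" by simp
  with \<open>odd (a * b)\<close> show False by simp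
qed

end

lemma cop_dvd1: "coprime (x::nat) y \<Longrightarrow> x dvd y \<Longrightarrow> x = 1"
  by (simp add: coprime_absorb_left)

lemma cop_eq1: "coprime (x::nat) y \<Longrightarrow> x = y \<Longrightarrow> x = 1"
  by simp


lemma lt_contra:
  assumes I: "idx n a b r t" and I': "idx n' a' b' r' t'" and rr: "r = r'"
    and sum: "idx.P n a + idx.Q n b = idx.P n' a' + idx.Q n' b'"
    and C: "idx.P n a dvd 2 * r' \<or> idx.P n a dvd idx.P n' a' \<or> idx.P n a dvd idx.Q n' b' \<or> idx.P n a dvd 4"
  shows "\<not> idx.P n' a' < idx.P n a"
proof
  interpret A: idx n a b r t by (rule I)
  interpret B: idx n' a' b' r' t' by (rule I')
  assume lt: "B.P < A.P"
  have Q'P': "B.Q \<le> B.P" by (rule B.Q_le_P)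
  have n1: "\<not> A.P dvd B.P" using lt B.P_pos by (auto dest: dvd_imp_le)
  have n2: "\<not> A.P dvd B.Q" using lt Q'P' B.Q_pos by (auto dest: dvd_imp_le)
  have C': "A.P dvd 2 * r \<or> A.P dvd 4" using C n1 n2 rr by auto
  have b1: "b = 1"
  proof (cases "b = 1")
    case True then show ?thesis .
  next
    case False
    then have b2: "b \<ge> 2" using A.bpos by simp
    from C' show ?thesis
    proof
      assume "A.P dvd 2 * r"
      then have "A.g * b dvd A.g * t" using A.P_eq A.gt by simp
      then have "b dvd t" using A.g_pos by simp
      then have "b \<le> t" using A.tpos by (simp add: dvd_imp_le)
      then have "t = 2" "b = 2" using A.t12 b2 by auto
      then show ?thesis using A.t12 by auto
    next
      assume "A.P dvd 4"
      then have "A.g * b \<le> 4" using A.P_eq by (simp add: dvd_imp_le)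
      then have "A.g * 2 \<le> 4" using b2 by (meson le_trans mult_le_mono2)
      then have "A.g \<le> 2" by simp
      moreover have "A.g \<noteq> 1"
      proof
        assume "A.g = 1"
        then have "t = 2 * r" using A.gt by simp
        then have "r = 1" "t = 2" using A.t12 A.r_pos by auto
        then show False using A.t_r1 by simp
      qed
      ultimately have g2: "A.g = 2" using A.g_pos by simp
      then have "b \<le> 2" using \<open>A.g * b \<le> 4\<close> by simp
      then have bb: "b = 2" using b2 by simp
      then have "a \<le> 2" using A.ab by simp
      moreover have "a \<noteq> 2" using A.cop bb by auto
      ultimately have aa: "a = 1" using A.a1 by simp
      have "A.P = 4" "A.Q = 2" using A.P_eq A.Q_eq g2 aa bb by simp_all
      then have "B.P + B.Q = 6" "B.P < 4" using sum lt by simp_all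
      then have "B.P = 3" "B.Q = 3" using Q'P' by simp_all
      then have "B.g * b' = 3" "B.g * a' = 3" using B.P_eq B.Q_eq by simp_all
      then have "a' = b'" using B.g_pos by (metis mult_left_cancel neq0_conv)
      then have "a' = 1" "b' = 1" using B.cop by simp_all
      then have "B.g = 3" using \<open>B.g * b' = 3\<close> by simp
      then have "3 * t' = 2 * r'" using B.gt by simp
      moreover have "2 * t = 2 * r" using A.gt g2 by simp
      ultimately have "3 * t' = 2 * t" using rr by simp
      then show ?thesis using A.t12 B.t12 by auto
    qed
  qed
  then have "a = 1" using A.ab A.a1 by simp
  then have "A.P = A.g" "A.Q = A.g" using b1 A.P_eq A.Q_eq by simp_all
  then show False using sum lt Q'P' by simp
qed

lemma case_eq_r:
  assumes I: "idx n a b r t" and I': "idx n' a' b' r' t'" and rr: "r = r'"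
    and C1: "2 * (r - 1) + idx.P n a + idx.Q n b = 2 * (r' - 1) + idx.P n' a' + idx.Q n' b'"
    and C4: "idx.P n a dvd 2 * r' \<or> idx.P n a dvd idx.P n' a' \<or> idx.P n a dvd idx.Q n' b' \<or> idx.P n a dvd 4"
    and C3: "idx.P n' a' dvd 2 * r \<or> idx.P n' a' dvd idx.P n a \<or> idx.P n' a' dvd idx.Q n b \<or> idx.P n' a' dvd 4"
  shows "(n, a, b, r) = (n', a', b', r')"
proof -
  interpret A: idx n a b r t by (rule I)
  interpret B: idx n' a' b' r' t' by (rule I')
  have sum: "A.P + A.Q = B.P + B.Q" using C1 rr by simp
  have "\<not> B.P < A.P" by (rule lt_contra[OF I I' rr sum C4])
  moreover have "\<not> A.P < B.P" by (rule lt_contra[OF I' I rr[symmetric] sum[symmetric] C3])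
  ultimately have PP: "A.P = B.P" by simp
  then have QQ: "A.Q = B.Q" using sum by simp
  have gg: "A.g = B.g" using A.g_gcd B.g_gcd PP QQ by simp
  have "b = b'" using PP A.P_eq B.P_eq gg A.g_pos by simp
  moreover have "a = a'" using QQ A.Q_eq B.Q_eq gg A.g_pos by simp
  moreover have "n = n'" using A.n_eq B.n_eq gg calculation by simp
  ultimately show ?thesis using rr by simp
qed


lemma dvd2: "(2 * x dvd 2 * y) \<longleftrightarrow> (x::nat) dvd y" by simp
lemma four: "(4::nat) * x = 2 * (2 * x)" "(4::nat) = 2 * 2" by simp_all

lemma case_r12:
  assumes I: "idx n a b 1 t" and I': "idx n' a' b' 2 t'"
    and C1: "idx.P n a + idx.Q n b = 2 + idx.P n' a' + idx.Q n' b'"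
    and C3P: "idx.P n' a' dvd 2 \<or> idx.P n' a' dvd idx.P n a \<or> idx.P n' a' dvd idx.Q n b \<or> idx.P n' a' dvd 4"
    and C3Q: "idx.Q n' b' dvd 2 \<or> idx.Q n' b' dvd idx.P n a \<or> idx.Q n' b' dvd idx.Q n b \<or> idx.Q n' b' dvd 4"
    and C4P: "idx.P n a dvd 4 \<or> idx.P n a dvd idx.P n' a' \<or> idx.P n a dvd idx.Q n' b' \<or> idx.P n a dvd 4"
    and C4Q: "idx.Q n b dvd 4 \<or> idx.Q n b dvd idx.P n' a' \<or> idx.Q n b dvd idx.Q n' b' \<or> idx.Q n b dvd 4"
  shows "odd b \<and> n = 2 * b \<and> a = 2 \<and> n' = b \<and> a' = 1 \<and> b' = b"
proof -
  interpret A: idx n a b 1 t by (rule I)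
  interpret B: idx n' a' b' 2 t' by (rule I')
  have t1: "t = 1" using A.t_r1 by simp
  have g2: "A.g = 2" using A.gt t1 by simp
  have P: "A.P = 2 * b" and Q: "A.Q = 2 * a" using A.P_eq A.Q_eq g2 by simp_all
  have nab: "n = a * b" using A.n_eq g2 by simp
  have cop: "coprime a b" "coprime a' b'" using A.cop B.cop by simp_all
  have a1: "1 \<le> a" "a \<le> b" "1 \<le> a'" "a' \<le> b'" using A.a1 A.ab B.a1 B.ab by simp_all
  have "B.g * t' = 4" using B.gt by simp
  then consider (T1) "t' = 1" "B.g = 4" | (T2) "t' = 2" "B.g = 2" using B.t12 by auto
  then show ?thesis
  proof cases
    case T1
    have P': "B.P = 4 * b'" and Q': "B.Q = 4 * a'" using B.P_eq B.Q_eq T1 by simp_all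
    have sum: "a + b = 1 + 2 * a' + 2 * b'" using C1 P Q P' Q' by simp
    show ?thesis
    proof (cases "b' = 1")
      case True
      then have "a' = 1" using a1 by simp
      then have "2 * b dvd 4" using C4P P P' Q' True by auto
      then have "b \<le> 2" by (auto dest: dvd_imp_le)
      then show ?thesis using sum True \<open>a' = 1\<close> a1 by simp
    next
      case False
      then have b'2: "b' \<ge> 2" using a1 by simp
      have "\<not> 4 * b' dvd 2" using b'2 by (auto dest: dvd_imp_le)
      moreover have "\<not> 4 * b' dvd 4" using b'2 by (auto dest: dvd_imp_le)
      ultimately have "4 * b' dvd 2 * b \<or> 4 * b' dvd 2 * a" using C3P P Q P' by auto
      then have "2 * (2 * b') dvd 2 * b \<or> 2 * (2 * b') dvd 2 * a" by simp
      then have c3: "2 * b' dvd b \<or> 2 * b' dvd a" unfolding dvd2 .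
      have "2 * b dvd 2 * 2 \<or> 2 * b dvd 2 * (2 * b') \<or> 2 * b dvd 2 * (2 * a')" using C4P P P' Q' by auto
      then have c4: "b dvd 2 \<or> b dvd 2 * b' \<or> b dvd 2 * a'" unfolding dvd2 .
      from c3 show ?thesis
      proof
        assume h: "2 * b' dvd b"
        then have bge: "2 * b' \<le> b" using a1 by (auto dest: dvd_imp_le)
        have bb: "b = 2 * b'"
        proof -
          have "\<not> b dvd 2" using bge b'2 by (auto dest: dvd_imp_le)
          moreover have "\<not> b dvd 2 * a'"
          proof
            assume "b dvd 2 * a'"
            then have "b \<le> 2 * a'" using a1 by (auto dest: dvd_imp_le)
            then have "a' = b'" using bge a1 by simp
            then show False using cop b'2 by simp
          qed
          ultimately have "b dvd 2 * b'" using c4 by blast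
          then show ?thesis using h by (simp add: dvd_antisym)
        qed
        then have aa: "a = 1 + 2 * a'" using sum by simp
        have "a' = 1"
        proof -
          have "\<not> 4 * a' dvd 2" using a1 by (auto dest: dvd_imp_le)
          moreover have "\<not> 4 * a' dvd 2 * a"
          proof
            assume "4 * a' dvd 2 * a"
            moreover have "2 * a = 4 * a' + 2" using aa by simp
            ultimately have "4 * a' dvd 4 * a' + 2" by simp
            then have "4 * a' dvd 2" using dvd_add_right_iff[of "4 * a'" "4 * a'" 2] by simp
            then show False using a1 by (auto dest: dvd_imp_le)
          qed
          ultimately have "4 * a' dvd 4 * b' \<or> 4 * a' dvd 4" using C3Q P Q Q' bb by auto
          then have "2 * (2 * a') dvd 2 * (2 * b') \<or> 2 * (2 * a') dvd 2 * (2 * 1)" by simp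
          then have "a' dvd b' \<or> a' dvd 1" unfolding dvd2 .
          then show ?thesis using cop cop_dvd1 by auto
        qed
        then have a3: "a = 3" using aa by simp
        have "6 dvd 4 * b'"
        proof -
          have "\<not> (6::nat) dvd 4" by simp
          then show ?thesis using C4Q Q P' Q' a3 \<open>a' = 1\<close> by auto
        qed
        then have "3 dvd b'" by presburger
        then have "3 dvd b" using bb by simp
        then show ?thesis using cop a3 cop_dvd1 by fastforce
      next
        assume h: "2 * b' dvd a"
        then have age: "2 * b' \<le> a" using a1 by (auto dest: dvd_imp_le)
        have "a = b"
        proof -
          have "\<not> b dvd 2" using age b'2 a1 by (auto dest: dvd_imp_le)
          then have "b dvd 2 * b' \<or> b dvd 2 * a'" using c4 by blast
          then have "b \<le> 2 * b' \<or> b \<le> 2 * a'" using a1 by (auto dest: dvd_imp_le)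
          then show ?thesis using age a1 by auto
        qed
        then show ?thesis using cop age b'2 by simp
      qed
    qed
  next
    case T2
    have P': "B.P = 2 * b'" and Q': "B.Q = 2 * a'" using B.P_eq B.Q_eq T2 by simp_all
    have sum: "a + b = 1 + a' + b'" using C1 P Q P' Q' by simp
    have n'ab: "2 * n' = 2 * (a' * b')" using B.n_eq T2 by simp
    have oddb': "odd b'" "odd a'" using B.t12 T2 by auto
    have b'3: "b' \<ge> 3"
    proof -
      have "b' \<noteq> 1"
      proof
        assume "b' = 1" then have "n' = 1" using n'ab a1 by simp
        then show False using B.n2 by simp
      qed
      moreover have "b' \<noteq> 2" using oddb' by auto
      ultimately show ?thesis using a1 by simp
    qed
    have c3: "b' dvd b \<or> b' dvd a"
    proof -
      have "\<not> 2 * b' dvd 2" using b'3 by (auto dest: dvd_imp_le)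
      moreover have "\<not> 2 * b' dvd 4" using b'3 by (auto dest: dvd_imp_le)
      moreover have "2 * b' dvd 2 * b \<or> 2 * b' dvd 2 * a \<or> 2 * b' dvd 2 \<or> 2 * b' dvd 4" using C3P P Q P' by auto
      ultimately show ?thesis unfolding dvd2 by blast
    qed
    have "2 * b dvd 2 * 2 \<or> 2 * b dvd 2 * b' \<or> 2 * b dvd 2 * a'" using C4P P P' Q' by auto
    then have c4: "b dvd 2 \<or> b dvd b' \<or> b dvd a'" unfolding dvd2 .
    have "2 * a dvd 2 * 2 \<or> 2 * a dvd 2 * b' \<or> 2 * a dvd 2 * a'" using C4Q Q P' Q' by auto
    then have c4q: "a dvd 2 \<or> a dvd b' \<or> a dvd a'" unfolding dvd2 .
    from c3 show ?thesis
    proof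
      assume h: "b' dvd b"
      then have bge: "b' \<le> b" using a1 by (auto dest: dvd_imp_le)
      have bb: "b = b'"
      proof -
        have "\<not> b dvd 2" using bge b'3 by (auto dest: dvd_imp_le)
        moreover have "\<not> b dvd a'"
        proof
          assume "b dvd a'"
          then have "b \<le> a'" using a1 by (auto dest: dvd_imp_le)
          then have "a' = b'" using bge a1 by simp
          then show False using cop b'3 by simp
        qed
        ultimately have "b dvd b'" using c4 by blast
        then show ?thesis using h by (simp add: dvd_antisym)
      qed
      then have aa: "a = 1 + a'" using sum by simp
      have "a = 2"
      proof -
        have "\<not> a dvd b'" using cop bb aa a1 cop_dvd1 by fastforce
        moreover have "\<not> a dvd a'" using aa a1 by (auto dest: dvd_imp_le)
        ultimately have "a dvd 2" using c4q by blast
        then have "a \<le> 2" by (auto dest: dvd_imp_le)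
        then show ?thesis using aa a1 by simp
      qed
      then show ?thesis using aa bb nab n'ab oddb' by simp
    next
      assume h: "b' dvd a"
      then have age: "b' \<le> a" using a1 by (auto dest: dvd_imp_le)
      have "a = b"
      proof -
        have "\<not> b dvd 2" using age b'3 a1 by (auto dest: dvd_imp_le)
        then have "b dvd b' \<or> b dvd a'" using c4 by blast
        then have "b \<le> b' \<or> b \<le> a'" using a1 by (auto dest: dvd_imp_le)
        then show ?thesis using age a1 by auto
      qed
      then show ?thesis using cop age b'3 by simp
    qed
  qed
qed


lemma lambda_idx:
  assumes n2: "2 \<le> n" and L: "(n, a, b, r) \<in> Lambda_set n"
  shows "\<exists>t. idx n a b r t"
proof -
  from L have om: "(a, b) \<in> Omega_set n" and rr: "r = n div (a * b) \<or> (odd (a * b) \<and> r = 2 * n div (a * b))"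
    unfolding Lambda_set_def by auto
  from om have h: "1 \<le> a" "a \<le> b" "a dvd n" "b dvd n" "coprime a b"
    unfolding Omega_set_def by auto
  have abn: "a * b dvd n" using h divides_mult by blast
  from rr show ?thesis
  proof
    assume "r = n div (a * b)"
    then have "r * (a * b) = 1 * n" using abn by simp
    then have "idx n a b r 1" using h n2 by unfold_locales auto
    then show ?thesis by blast
  next
    assume o: "odd (a * b) \<and> r = 2 * n div (a * b)"
    then have "r * (a * b) = 2 * n" using abn by (metis dvd_div_mult_self dvd_mult2 mult.commute)
    then have "idx n a b r 2" using h n2 o by unfold_locales auto
    then show ?thesis by blast
  qed
qed

lemma part1:
  assumes n2: "2 \<le> n" and n2': "2 \<le> n'"
    and L: "(n, a, b, r) \<in> Lambda_set n" and L': "(n', a', b', r') \<in> Lambda_set n'"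
    and ne: "(n, a, b, r) \<noteq> (n', a', b', r')"
    and iso: "refl_isomorphic (Ggrp n a b r) (Ggrp n' a' b' r')"
  shows "\<exists>m. odd m \<and> {(n, a, b, r), (n', a', b', r')} = {(m, 1, m, 2), (2 * m, 2, m, 1)}"
proof -
  obtain t where I: "idx n a b r t" using lambda_idx[OF n2 L] by blast
  obtain t' where I': "idx n' a' b' r' t'" using lambda_idx[OF n2' L'] by blast
  interpret A: idx n a b r t by (rule I)
  interpret B: idx n' a' b' r' t' by (rule I')
  obtain f where f: "refl_iso f (Ggrp n a b r) (Ggrp n' a' b' r')" using iso by (auto simp: refl_isomorphic_def)
  note c = compat[OF I I' f]
  have rr: "r \<noteq> r'"
  proof
    assume "r = r'"
    then have "(n, a, b, r) = (n', a', b', r')"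
      using case_eq_r[OF I I'] c(1) c(5)[of A.P] c(3)[of B.P] by simp
    then show False using ne by simp
  qed
  have r2: "r \<le> 2"
  proof (rule ccontr)
    assume "\<not> r \<le> 2"
    then have "3 \<le> r" by simp
    then have "r dvd r'" using c(4) by (auto dest: dvd_imp_le)
    then have "r \<le> r'" using B.r_pos by (simp add: dvd_imp_le)
    then have "r' dvd r" using c(2) \<open>3 \<le> r\<close> by (auto dest: dvd_imp_le)
    then show False using \<open>r dvd r'\<close> rr by (simp add: dvd_antisym)
  qed
  have r2': "r' \<le> 2"
  proof (rule ccontr)
    assume "\<not> r' \<le> 2"
    then have "3 \<le> r'" by simp
    then have "r' dvd r" using c(2) by (auto dest: dvd_imp_le)
    then have "r' \<le> r" using A.r_pos by (simp add: dvd_imp_le)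
    then show False using r2 \<open>3 \<le> r'\<close> by simp
  qed
  have "(r = 1 \<and> r' = 2) \<or> (r = 2 \<and> r' = 1)" using r2 r2' rr A.r_pos B.r_pos by auto
  then show ?thesis
  proof
    assume h: "r = 1 \<and> r' = 2"
    have I1: "idx n a b 1 t" using I h by simp
    have I2: "idx n' a' b' 2 t'" using I' h by simp
    have "odd b \<and> n = 2 * b \<and> a = 2 \<and> n' = b \<and> a' = 1 \<and> b' = b"
      by (rule case_r12[OF I1 I2]) (use c(1) c(3) c(5) h in auto)
    then show ?thesis using h by (intro exI[of _ b]) auto
  next
    assume h: "r = 2 \<and> r' = 1"
    have I1: "idx n' a' b' 1 t'" using I' h by simp
    have I2: "idx n a b 2 t" using I h by simp
    have "odd b' \<and> n' = 2 * b' \<and> a' = 2 \<and> n = b' \<and> a = 1 \<and> b = b'"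
      by (rule case_r12[OF I1 I2]) (use c(1) c(3) c(5) h in auto)
    then show ?thesis using h by (intro exI[of _ b']) auto
  qed
qed


section \<open>Generic coset decomposition\<close>

lemma coset_decomp:
  assumes Hm: "\<And>x y. x \<in> H \<Longrightarrow> y \<in> H \<Longrightarrow> mmul x y \<in> H" and HI: "mI \<in> H"
    and TT: "mmul T T = mI" and conj: "\<And>h. h \<in> H \<Longrightarrow> mmul T (mmul h T) \<in> H"
    and gens: "\<And>s. s \<in> S \<Longrightarrow> s \<in> H \<union> (\<lambda>h. mmul h T) ` H"
    and gensi: "\<And>s. s \<in> S \<Longrightarrow> madj s \<in> H \<union> (\<lambda>h. mmul h T) ` H"
    and HG: "H \<subseteq> gen_grp S" and TG: "T \<in> gen_grp S"
  shows "gen_grp S = H \<union> (\<lambda>h. mmul h T) ` H"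
proof
  have cl: "mmul x y \<in> H \<union> (\<lambda>h. mmul h T) ` H" if x: "x \<in> H \<union> (\<lambda>h. mmul h T) ` H" and y: "y \<in> H \<union> (\<lambda>h. mmul h T) ` H" for x y
  proof -
    have TH: "mmul T h = mmul (mmul T (mmul h T)) T" for h
      by (simp add: mmul_assoc TT)
    from x y show ?thesis
    proof (elim UnE imageE)
      fix h1 h2 assume "x \<in> H" "y \<in> H" then show ?thesis using Hm by blast
    next
      fix h1 h2 assume "x \<in> H" "h2 \<in> H" "y = mmul h2 T"
      then show ?thesis using Hm by (auto simp: mmul_assoc[symmetric])
    next
      fix h1 assume "h1 \<in> H" "x = mmul h1 T" "y \<in> H"
      then have "mmul x y = mmul (mmul h1 (mmul T (mmul y T))) T"
        by (simp add: mmul_assoc TH[of y])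
      then show ?thesis using Hm conj \<open>h1 \<in> H\<close> \<open>y \<in> H\<close> by blast
    next
      fix h1 h2 assume "h1 \<in> H" "x = mmul h1 T" "h2 \<in> H" "y = mmul h2 T"
      then have "mmul x y = mmul h1 (mmul T (mmul h2 T))"
        by (simp add: mmul_assoc)
      then show ?thesis using Hm conj \<open>h1 \<in> H\<close> \<open>h2 \<in> H\<close> by auto
    qed
  qed
  show "gen_grp S \<subseteq> H \<union> (\<lambda>h. mmul h T) ` H"
  proof
    fix g assume "g \<in> gen_grp S"
    then show "g \<in> H \<union> (\<lambda>h. mmul h T) ` H"
    proof (induction g rule: gen_grp.induct)
      case gen_one then show ?case using HI by simp
    next
      case (gen_mul g s) then show ?case using cl gens by blast
    next
      case (gen_inv g s) then show ?case using cl gensi by blast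
    qed
  qed
  show "H \<union> (\<lambda>h. mmul h T) ` H \<subseteq> gen_grp S"
    using HG TG gen_grp_mult by blast
qed

lemma W_double: "m > 0 \<Longrightarrow> W (2 * m) (2 * k) = W m k"
  by (simp add: W_def ang_def)
lemma WJ_double: "m > 0 \<Longrightarrow> WJ (2 * m) (2 * k) = WJ m k"
  by (simp add: WJ_def ang_def)

lemma quat_k_enc: "m > 0 \<Longrightarrow> WJ (2 * m) (int m) = quat_k"
  by (rule quat_eqI) (simp_all add: ang_def quat_k_def)
lemma quat_mk_enc: "m > 0 \<Longrightarrow> WJ (2 * m) (int m + int (2 * m)) = - quat_k"
proof -
  assume m: "m > 0"
  have "WJ (2 * m) (int m + int (2 * m)) = WJ (2 * m) (int m) * W (2 * m) (- int (2 * m))"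
    by simp
  also have "W (2 * m) (- int (2 * m)) = -1"
    using W_n[of "2 * m"] m W_inverse[of "2 * m" "int (2 * m)"] by simp
  finally show ?thesis using quat_k_enc[OF m] by simp
qed


section \<open>Invariant set for H\<close>

definition condH :: "nat \<Rightarrow> bool \<Rightarrow> int \<Rightarrow> int \<Rightarrow> bool" where
  "condH nn e k1 k2 \<longleftrightarrow> (2 * int nn) dvd (k1 + k2 - (if e then int nn else 0)) \<and> even k1 \<and> even k2"

definition SH :: "nat \<Rightarrow> m2 set" where
  "SH nn = {DM nn e k1 k2 |e k1 k2. condH nn e k1 k2} \<union> {AM nn e k1 k2 |e k1 k2. condH nn e k1 k2}"

lemma condH_condS: "even nn \<Longrightarrow> condH nn e k1 k2 \<Longrightarrow> condS nn (2 * int nn) 2 e k1 k2"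
  unfolding condH_def condS_def by auto

lemma condH_mult1:
  assumes "even nn" "condH nn e k1 k2" "condH nn e' l1 l2"
  shows "condH nn (e \<noteq> e') (xe nn e e' k1 l1) (xe nn e e' k2 l2)"
proof -
  have "condS nn (2 * int nn) 2 (e \<noteq> e') (xe nn e e' k1 l1) (xe nn e e' k2 l2)"
    using condS_mult1[OF condH_condS[OF assms(1,2)] condH_condS[OF assms(1,3)]] assms(1) by simp
  then show ?thesis using assms unfolding condH_def condS_def xe_def by auto
qed

lemma condH_mult2:
  assumes "even nn" "condH nn e k1 k2" "condH nn e' l1 l2"
  shows "condH nn (e \<noteq> e') (xe nn e e' k1 l2) (xe nn e e' k2 l1)"
proof -
  have "condS nn (2 * int nn) 2 (e \<noteq> e') (xe nn e e' k1 l2) (xe nn e e' k2 l1)"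
    using condS_mult2[OF condH_condS[OF assms(1,2)] condH_condS[OF assms(1,3)]] assms(1) by simp
  then show ?thesis using assms unfolding condH_def condS_def xe_def by auto
qed

lemma condH_madj:
  assumes "even nn" "condH nn e k1 k2"
  shows "condH nn e (cj nn e k1) (cj nn e k2)" "condH nn e (cj nn e k2) (cj nn e k1)"
proof -
  have "condS nn (2 * int nn) 2 e (cj nn e k1) (cj nn e k2)"
    using condS_madj1[OF condH_condS[OF assms]] assms(1) by simp
  then show "condH nn e (cj nn e k1) (cj nn e k2)" using assms unfolding condH_def condS_def cj_def by auto
  have "condS nn (2 * int nn) 2 e (cj nn e k2) (cj nn e k1)"
    using condS_madj2[OF condH_condS[OF assms]] assms(1) by simp
  then show "condH nn e (cj nn e k2) (cj nn e k1)" using assms unfolding condH_def condS_def cj_def by auto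
qed

lemma condH_rep:
  assumes "nn > 0" "even nn" "condH nn e k1 k2" "(2 * int nn) dvd (k1 - l1)" "(2 * int nn) dvd (k2 - l2)"
  shows "condH nn e l1 l2"
proof -
  from assms(3) have c: "(2 * int nn) dvd (k1 + k2 - (if e then int nn else 0))" "even k1" "even k2"
    by (auto simp: condH_def)
  have dd: "(2 * int nn) dvd (k1 + k2 - (if e then int nn else 0)) - (k1 - l1) - (k2 - l2)"
    by (rule dvd_diff[OF dvd_diff[OF c(1) assms(4)] assms(5)])
  have eq: "(k1 + k2 - (if e then int nn else 0)) - (k1 - l1) - (k2 - l2) = l1 + l2 - (if e then int nn else 0)"
    by simp
  have d: "(2 * int nn) dvd (l1 + l2 - (if e then int nn else 0))" using dd by (simp only: eq)
  have "even (k1 - l1)" "even (k2 - l2)" using assms(4,5) by (metis dvd_mult_left even_mult_iff)+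
  then have "even l1" "even l2" using c by auto
  then show ?thesis using d unfolding condH_def by blast
qed

lemma dvd_swap: "(x::int) dvd (k - l) \<Longrightarrow> x dvd (l - k)"
  by (metis dvd_minus_iff minus_diff_eq)

lemma DM_SH_iff: "nn > 0 \<Longrightarrow> even nn \<Longrightarrow> DM nn e k1 k2 \<in> SH nn \<longleftrightarrow> condH nn e k1 k2"
proof
  assume h: "nn > 0" "even nn" "DM nn e k1 k2 \<in> SH nn"
  then obtain e' l1 l2 where "DM nn e k1 k2 = DM nn e' l1 l2" "condH nn e' l1 l2"
    unfolding SH_def by (auto simp: DM_neq_AM)
  then show "condH nn e k1 k2" using h(1,2) by (auto simp: DM_eq_iff intro: condH_rep dvd_swap)
next
  assume "condH nn e k1 k2" then show "DM nn e k1 k2 \<in> SH nn" unfolding SH_def by blast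
qed

lemma AM_SH_iff: "nn > 0 \<Longrightarrow> even nn \<Longrightarrow> AM nn e k1 k2 \<in> SH nn \<longleftrightarrow> condH nn e k1 k2"
proof
  assume h: "nn > 0" "even nn" "AM nn e k1 k2 \<in> SH nn"
  then obtain e' l1 l2 where "AM nn e k1 k2 = AM nn e' l1 l2" "condH nn e' l1 l2"
    unfolding SH_def by (auto simp: DM_neq_AM[symmetric])
  then show "condH nn e k1 k2" using h(1,2) by (auto simp: AM_eq_iff intro: condH_rep dvd_swap)
next
  assume "condH nn e k1 k2" then show "AM nn e k1 k2 \<in> SH nn" unfolding SH_def by blast
qed

lemma SH_cases:
  assumes "g \<in> SH nn"
  obtains e k1 k2 where "g = DM nn e k1 k2" "condH nn e k1 k2" | e k1 k2 where "g = AM nn e k1 k2" "condH nn e k1 k2"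
  using assms unfolding SH_def by blast

lemma SH_mult:
  assumes "nn > 0" "even nn" "g \<in> SH nn" "h \<in> SH nn"
  shows "mmul g h \<in> SH nn"
  using assms(3)
proof (cases rule: SH_cases)
  case (1 e k1 k2)
  from assms(4) show ?thesis
  proof (cases rule: SH_cases)
    case (1 e' l1 l2)
    then show ?thesis using \<open>g = DM nn e k1 k2\<close> \<open>condH nn e k1 k2\<close> condH_mult1[OF assms(2)]
      by (simp add: mmul_DM_DM assms(1,2) DM_SH_iff)
  next
    case (2 e' l1 l2)
    then show ?thesis using \<open>g = DM nn e k1 k2\<close> \<open>condH nn e k1 k2\<close> condH_mult1[OF assms(2)]
      by (simp add: mmul_DM_AM assms(1,2) AM_SH_iff)
  qed
next
  case (2 e k1 k2)
  from assms(4) show ?thesis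
  proof (cases rule: SH_cases)
    case (1 e' l1 l2)
    then show ?thesis using \<open>g = AM nn e k1 k2\<close> \<open>condH nn e k1 k2\<close> condH_mult2[OF assms(2)]
      by (simp add: mmul_AM_DM assms(1,2) AM_SH_iff)
  next
    case (2 e' l1 l2)
    then show ?thesis using \<open>g = AM nn e k1 k2\<close> \<open>condH nn e k1 k2\<close> condH_mult2[OF assms(2)]
      by (simp add: mmul_AM_AM assms(1,2) DM_SH_iff)
  qed
qed

lemma SH_madj:
  assumes "nn > 0" "even nn" "g \<in> SH nn"
  shows "madj g \<in> SH nn"
  using assms(3)
proof (cases rule: SH_cases)
  case (1 e k1 k2)
  then show ?thesis using condH_madj[OF assms(2)] by (simp add: madj_DM assms(1,2) DM_SH_iff)
next
  case (2 e k1 k2)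
  then show ?thesis using condH_madj[OF assms(2)] by (simp add: madj_AM assms(1,2) AM_SH_iff)
qed

lemma gen_grp_SH:
  assumes "nn > 0" "even nn" "S \<subseteq> SH nn"
  shows "gen_grp S \<subseteq> SH nn"
proof
  fix g assume "g \<in> gen_grp S"
  then show "g \<in> SH nn"
  proof (induction g rule: gen_grp.induct)
    case gen_one
    have "condH nn False 0 0" by (simp add: condH_def)
    then show ?case using assms(1,2) by (simp add: mI_DM[of nn] DM_SH_iff)
  next
    case (gen_mul g s) then show ?case using assms SH_mult by blast
  next
    case (gen_inv g s) then show ?case using assms SH_mult SH_madj by blast
  qed
qed


locale pt2 =
  fixes m :: nat
  assumes modd: "odd m" and m3: "3 \<le> m"
begin

definition nn :: nat where "nn = 2 * m"
lemma nn_pos: "nn > 0" using m3 by (simp add: nn_def)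
lemma nn_even: "even nn" by (simp add: nn_def)
lemma int_nn: "int nn = 2 * int m" by (simp add: nn_def)
lemma mpos: "m > 0" using m3 by simp

definition D :: m2 where "D = DM nn False 0 (int nn)"
definition D' :: m2 where "D' = DM nn False (int nn) 0"
definition Nk :: m2 where "Nk = AM nn True (int m) (int m + int nn)"
definition NkM :: m2 where "NkM = AM nn True (int m + int nn) (int m)"
definition HS :: "m2 set" where "HS = {AM nn False 0 0, AM nn False 2 (- 2), AM nn True 0 (int nn)}"
definition H :: "m2 set" where "H = gen_grp HS"

lemma omega_m_enc: "omega m ^ k = W nn (2 * int k)"
  using W_double[OF mpos, of "int k"] by (simp add: omega_pow nn_def)

lemma G1_def2: "Ggrp m 1 m 2 = gen_grp {D', AM nn False 0 0, AM nn False 2 (- 2), AM nn True 0 (int nn), AM nn True (int nn) (2 * int nn)}"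
proof -
  have "M2 (omega m ^ (2 * m div 2)) 0 0 1 = D'"
    by (simp add: omega_m_enc D'_def DM_def X_def int_nn)
  moreover have "Nmat 1 = AM nn False 0 0"
    using Nmat_X[OF nn_pos, of False 0] by (simp add: X_def cj_def)
  moreover have "Nmat (omega m) = AM nn False 2 (- 2)"
    using Nmat_X[OF nn_pos, of False 2] omega_m_enc[of 1] by (simp add: X_def cj_def)
  moreover have "Nmat quat_j = AM nn True 0 (int nn)"
    using Nmat_X[OF nn_pos, of True 0] by (simp add: X_def cj_def WJ_zero)
  moreover have "Nmat (omega m ^ m * quat_j) = AM nn True (int nn) (2 * int nn)"
    using Nmat_X[OF nn_pos, of True "int nn"] W_WJ[of nn "int nn" 0]
    by (simp add: X_def cj_def omega_m_enc WJ_zero int_nn)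
  ultimately show ?thesis unfolding Ggrp_def by (simp add: insert_commute)
qed

lemma G2_def2: "Ggrp (2 * m) 2 m 1 = gen_grp {DM nn False (2 * int nn) 0, AM nn False 0 0, AM nn False 2 (- 2), AM nn True 0 (int nn), Nk}"
proof -
  have "M2 (omega (2 * m) ^ (2 * (2 * m) div 1)) 0 0 1 = DM nn False (2 * int nn) 0"
    by (simp add: omega_pow DM_def X_def nn_def)
  moreover have "Nmat 1 = AM nn False 0 0"
    using Nmat_X[OF nn_pos, of False 0] by (simp add: X_def cj_def)
  moreover have "Nmat (omega (2 * m) ^ 2) = AM nn False 2 (- 2)"
    using Nmat_X[OF nn_pos, of False 2] by (simp add: X_def cj_def omega_pow nn_def)
  moreover have "Nmat quat_j = AM nn True 0 (int nn)"
    using Nmat_X[OF nn_pos, of True 0] by (simp add: X_def cj_def WJ_zero)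
  moreover have "Nmat (omega (2 * m) ^ m * quat_j) = Nk"
    using Nmat_X[OF nn_pos, of True "int m"] W_WJ[of nn "int m" 0]
    by (simp add: X_def cj_def omega_pow WJ_zero Nk_def nn_def)
  ultimately show ?thesis unfolding Ggrp_def by (simp add: insert_commute nn_def)
qed

lemma D_eq: "M2 1 0 0 (-1) = D"
  using W_n[OF nn_pos] by (simp add: D_def DM_def X_def)
lemma Nk_eq: "M2 0 quat_k (- quat_k) 0 = Nk"
  using quat_k_enc[OF mpos] quat_mk_enc[OF mpos] by (simp add: Nk_def AM_def X_def nn_def)
lemma N1_eq: "Nmat 1 = AM nn False 0 0"
  using Nmat_X[OF nn_pos, of False 0] by (simp add: X_def cj_def)
lemma Nw_eq: "Nmat (omega m) = AM nn False 2 (- 2)"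
  using Nmat_X[OF nn_pos, of False 2] omega_m_enc[of 1] by (simp add: X_def cj_def)
lemma Nj_eq: "Nmat quat_j = AM nn True 0 (int nn)"
  using Nmat_X[OF nn_pos, of True 0] by (simp add: X_def cj_def WJ_zero)


lemma madj_HS: "s \<in> HS \<Longrightarrow> madj s = s"
  unfolding HS_def by (auto simp: madj_AM nn_pos cj_def AM_eq_iff)

lemma H_SH: "H \<subseteq> SH nn"
  unfolding H_def
proof (rule gen_grp_SH[OF nn_pos nn_even])
  show "HS \<subseteq> SH nn" unfolding HS_def using nn_pos nn_even
    by (auto simp: AM_SH_iff condH_def)
qed

lemma HS_sub: "HS \<subseteq> gen_grp S \<Longrightarrow> H \<subseteq> gen_grp S"
  unfolding H_def by (rule gen_grp_mono) (use madj_HS in auto)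

lemma H_G1: "H \<subseteq> Ggrp m 1 m 2"
  unfolding G1_def2 by (rule HS_sub) (auto simp: HS_def intro: gen_grp_gen)
lemma H_G2: "H \<subseteq> Ggrp (2 * m) 2 m 1"
  unfolding G2_def2 by (rule HS_sub) (auto simp: HS_def intro: gen_grp_gen)

lemma H_mult: "x \<in> H \<Longrightarrow> y \<in> H \<Longrightarrow> mmul x y \<in> H"
  unfolding H_def by (rule gen_grp_mult)
lemma H_I: "mI \<in> H" unfolding H_def by (rule gen_grp.gen_one)
lemma HS_H: "s \<in> HS \<Longrightarrow> s \<in> H" unfolding H_def by (rule gen_grp_gen)

lemma H_fam: "AM nn False (2 * int j) (- (2 * int j)) \<in> H"
proof -
  have step: "AM nn False (2 * x - y) (- (2 * x - y)) \<in> H" if "AM nn False x (- x) \<in> H" "AM nn False y (- y) \<in> H" for x y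
  proof -
    have "mmul (AM nn False x (- x)) (mmul (AM nn False y (- y)) (AM nn False x (- x))) = AM nn False (2 * x - y) (- (2 * x - y))"
      by (simp add: mmul_enc nn_pos xe_def algebra_simps)
    then show ?thesis using that H_mult by metis
  qed
  have "AM nn False (2 * int j) (- (2 * int j)) \<in> H \<and> AM nn False (2 * int (Suc j)) (- (2 * int (Suc j))) \<in> H"
  proof (induction j)
    case 0 then show ?case using HS_H by (simp add: HS_def)
  next
    case (Suc j)
    then have "AM nn False (2 * (2 * int (Suc j)) - 2 * int j) (- (2 * (2 * int (Suc j)) - 2 * int j)) \<in> H"
      using step by blast
    moreover have eq: "2 * (2 * int (Suc j)) - 2 * int j = 2 * int (Suc (Suc j))" by simp
    ultimately have "AM nn False (2 * int (Suc (Suc j))) (- (2 * int (Suc (Suc j)))) \<in> H" by (simp only: eq)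
    then show ?case using Suc by blast
  qed
  then show ?thesis by blast
qed

lemma mI_neg_H: "DM nn False (int nn) (int nn) \<in> H"
proof -
  have a: "AM nn False (int nn) (- int nn) \<in> H" using H_fam[of m] by (simp add: int_nn)
  have "mmul (AM nn False 0 0) (AM nn False (int nn) (- int nn)) = DM nn False (int nn) (int nn)"
    by (simp add: mmul_enc nn_pos xe_def DM_eq_iff)
  then show ?thesis using a HS_H[of "AM nn False 0 0"] H_mult by (metis HS_def insertI1)
qed

lemma AMT_nn_H: "AM nn True (int nn) 0 \<in> H"
proof -
  have "mmul (AM nn False 0 0) (mmul (AM nn True 0 (int nn)) (AM nn False 0 0)) = AM nn True (int nn) 0"
    by (simp add: mmul_enc nn_pos xe_def)
  moreover have "AM nn False 0 0 \<in> H" "AM nn True 0 (int nn) \<in> H" using HS_H by (auto simp: HS_def)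
  ultimately show ?thesis using H_mult by metis
qed

lemma DD: "mmul D D = mI"
  by (simp add: D_def mmul_enc nn_pos xe_def mI_DM[of nn] DM_eq_iff)
lemma NkNk: "mmul Nk Nk = mI"
  by (simp add: Nk_def mmul_enc nn_pos xe_def mI_DM[of nn] DM_eq_iff int_nn)

lemma DD': "mmul D (mmul D x) = x" using DD by (simp add: mmul_assoc[symmetric])
lemma NkNk': "mmul Nk (mmul Nk x) = x" using NkNk by (simp add: mmul_assoc[symmetric])

lemma conj_HS: "s \<in> HS \<Longrightarrow> mmul D (mmul s D) = mmul Nk (mmul s Nk) \<and> mmul D (mmul s D) \<in> H"
proof -
  assume "s \<in> HS"
  then consider "s = AM nn False 0 0" | "s = AM nn False 2 (- 2)" | "s = AM nn True 0 (int nn)"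
    unfolding HS_def by blast
  then show ?thesis
  proof cases
    case 1
    have "mmul D (mmul s D) = AM nn False (2 * int m) (- (2 * int m))"
      using 1 by (simp add: D_def mmul_enc nn_pos xe_def AM_eq_iff int_nn)
    moreover have "mmul Nk (mmul s Nk) = AM nn False (2 * int m) (- (2 * int m))"
      using 1 by (simp add: Nk_def mmul_enc nn_pos xe_def AM_eq_iff int_nn)
    ultimately show ?thesis using H_fam[of m] by simp
  next
    case 2
    have "mmul D (mmul s D) = AM nn False (2 * int (m + 1)) (- (2 * int (m + 1)))"
      using 2 by (simp add: D_def mmul_enc nn_pos xe_def AM_eq_iff int_nn)
    moreover have "mmul Nk (mmul s Nk) = AM nn False (2 * int (m + 1)) (- (2 * int (m + 1)))"
      using 2 by (simp add: Nk_def mmul_enc nn_pos xe_def AM_eq_iff int_nn)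
    ultimately show ?thesis using H_fam[of "m + 1"] by simp
  next
    case 3
    have "mmul D (mmul s D) = AM nn True (int nn) 0"
      using 3 by (simp add: D_def mmul_enc nn_pos xe_def AM_eq_iff int_nn)
    moreover have "mmul Nk (mmul s Nk) = AM nn True (int nn) 0"
      using 3 by (simp add: Nk_def mmul_enc nn_pos xe_def AM_eq_iff int_nn)
    ultimately show ?thesis using AMT_nn_H by simp
  qed
qed

lemma conj_H: "h \<in> H \<Longrightarrow> mmul D (mmul h D) = mmul Nk (mmul h Nk) \<and> mmul D (mmul h D) \<in> H"
  unfolding H_def
proof (induction h rule: gen_grp.induct)
  case gen_one
  then show ?case using DD NkNk H_I by (simp add: H_def)
next
  case (gen_mul g s)
  have e1: "mmul D (mmul (mmul s g) D) = mmul (mmul D (mmul s D)) (mmul D (mmul g D))"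
    by (simp add: mmul_assoc DD')
  have e2: "mmul Nk (mmul (mmul s g) Nk) = mmul (mmul Nk (mmul s Nk)) (mmul Nk (mmul g Nk))"
    by (simp add: mmul_assoc NkNk')
  have cs: "mmul D (mmul s D) = mmul Nk (mmul s Nk)" "mmul D (mmul s D) \<in> gen_grp HS"
    using conj_HS[OF gen_mul.hyps(2)] by (auto simp: H_def)
  have cg: "mmul D (mmul g D) = mmul Nk (mmul g Nk)" "mmul D (mmul g D) \<in> gen_grp HS"
    using gen_mul.IH by auto
  have "mmul D (mmul (mmul s g) D) \<in> gen_grp HS" unfolding e1 by (rule gen_grp_mult[OF cs(2) cg(2)])
  moreover have "mmul D (mmul (mmul s g) D) = mmul Nk (mmul (mmul s g) Nk)" unfolding e1 e2 cs(1) cg(1) ..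
  ultimately show ?case  by simp
next
  case (gen_inv g s)
  then have ms: "madj s = s" using madj_HS by blast
  have e1: "mmul D (mmul (mmul s g) D) = mmul (mmul D (mmul s D)) (mmul D (mmul g D))"
    by (simp add: mmul_assoc DD')
  have e2: "mmul Nk (mmul (mmul s g) Nk) = mmul (mmul Nk (mmul s Nk)) (mmul Nk (mmul g Nk))"
    by (simp add: mmul_assoc NkNk')
  have cs: "mmul D (mmul s D) = mmul Nk (mmul s Nk)" "mmul D (mmul s D) \<in> gen_grp HS"
    using conj_HS[OF gen_inv.hyps(2)] by (auto simp: H_def)
  have cg: "mmul D (mmul g D) = mmul Nk (mmul g Nk)" "mmul D (mmul g D) \<in> gen_grp HS"
    using gen_inv.IH by auto
  have "mmul D (mmul (mmul s g) D) \<in> gen_grp HS" unfolding e1 by (rule gen_grp_mult[OF cs(2) cg(2)])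
  moreover have "mmul D (mmul (mmul s g) D) = mmul Nk (mmul (mmul s g) Nk)" unfolding e1 e2 cs(1) cg(1) ..
  ultimately show ?case using ms by simp
qed


lemma D_in_G1: "D \<in> Ggrp m 1 m 2"
proof -
  have e: "mmul (AM nn False 0 0) (mmul D' (AM nn False 0 0)) = D"
    by (simp add: D_def D'_def mmul_enc nn_pos xe_def)
  have a: "AM nn False 0 0 \<in> Ggrp m 1 m 2" unfolding G1_def2 by (rule gen_grp_gen) simp
  have d: "D' \<in> Ggrp m 1 m 2" unfolding G1_def2 by (rule gen_grp_gen) simp
  have "mmul (AM nn False 0 0) (mmul D' (AM nn False 0 0)) \<in> Ggrp m 1 m 2"
    using a d unfolding Ggrp_def by (intro gen_grp_mult)
  then show ?thesis unfolding e .
qed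

lemma D'_eq: "D' = mmul (DM nn False (int nn) (int nn)) D"
  by (simp add: D_def D'_def mmul_enc nn_pos xe_def DM_eq_iff)

lemma NkM_eq: "NkM = mmul (DM nn False (int nn) (int nn)) Nk"
  by (simp add: NkM_def Nk_def mmul_enc nn_pos xe_def AM_eq_iff)

lemma G1_decomp: "Ggrp m 1 m 2 = H \<union> (\<lambda>h. mmul h D) ` H"
  unfolding G1_def2
proof (rule coset_decomp[OF H_mult H_I DD])
  let ?X = "H \<union> (\<lambda>h. mmul h D) ` H"
  show "mmul D (mmul h D) \<in> H" if "h \<in> H" for h using conj_H that by blast
  have D'i: "D' \<in> ?X" using D'_eq mI_neg_H by blast
  have T': "AM nn True (int nn) (2 * int nn) \<in> H"
  proof -
    have "AM nn True (int nn) (2 * int nn) = AM nn True (int nn) 0" by (simp add: AM_eq_iff nn_pos)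
    then show ?thesis using AMT_nn_H by simp
  qed
  have hs: "AM nn False 0 0 \<in> H" "AM nn False 2 (- 2) \<in> H" "AM nn True 0 (int nn) \<in> H"
    using HS_H by (auto simp: HS_def)
  have sub: "\<forall>s\<in>{D', AM nn False 0 0, AM nn False 2 (- 2), AM nn True 0 (int nn), AM nn True (int nn) (2 * int nn)}. s \<in> ?X"
    using D'i T' hs by (simp only: ball_simps) blast
  then show "s \<in> ?X" if "s \<in> {D', AM nn False 0 0, AM nn False 2 (- 2), AM nn True 0 (int nn), AM nn True (int nn) (2 * int nn)}" for s
    using that by blast
  have "madj D' = D'" by (simp add: D'_def madj_DM nn_pos cj_def DM_eq_iff)
  then have mD': "madj D' \<in> ?X" using D'i by simp
  have mT': "madj (AM nn True (int nn) (2 * int nn)) \<in> ?X"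
  proof -
    have "madj (AM nn True (int nn) (2 * int nn)) = AM nn True (int nn) 0"
      by (simp add: madj_AM nn_pos cj_def AM_eq_iff)
    then show ?thesis using AMT_nn_H by simp
  qed
  have mhs: "madj (AM nn False 0 0) \<in> ?X" "madj (AM nn False 2 (- 2)) \<in> ?X" "madj (AM nn True 0 (int nn)) \<in> ?X"
    using hs madj_HS by (auto simp: HS_def)
  have msub: "\<forall>s\<in>{D', AM nn False 0 0, AM nn False 2 (- 2), AM nn True 0 (int nn), AM nn True (int nn) (2 * int nn)}. madj s \<in> ?X"
    using mD' mT' mhs by (simp only: ball_simps)
  then show "madj s \<in> ?X" if "s \<in> {D', AM nn False 0 0, AM nn False 2 (- 2), AM nn True 0 (int nn), AM nn True (int nn) (2 * int nn)}" for s
    using that by blast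
  show "H \<subseteq> gen_grp {D', AM nn False 0 0, AM nn False 2 (- 2), AM nn True 0 (int nn), AM nn True (int nn) (2 * int nn)}"
    using H_G1 unfolding G1_def2 .
  show "D \<in> gen_grp {D', AM nn False 0 0, AM nn False 2 (- 2), AM nn True 0 (int nn), AM nn True (int nn) (2 * int nn)}"
    using D_in_G1 unfolding G1_def2 .
qed

lemma G2_decomp: "Ggrp (2 * m) 2 m 1 = H \<union> (\<lambda>h. mmul h Nk) ` H"
  unfolding G2_def2
proof (rule coset_decomp[OF H_mult H_I NkNk])
  let ?X = "H \<union> (\<lambda>h. mmul h Nk) ` H"
  show "mmul Nk (mmul h Nk) \<in> H" if "h \<in> H" for h using conj_H that by metis
  have I': "DM nn False (2 * int nn) 0 \<in> ?X"
  proof -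
    have "DM nn False (2 * int nn) 0 = mI" by (simp add: mI_DM[of nn] DM_eq_iff nn_pos)
    then show ?thesis using H_I by simp
  qed
  have Nki: "Nk \<in> ?X" using H_I by force
  have hs: "AM nn False 0 0 \<in> ?X" "AM nn False 2 (- 2) \<in> ?X" "AM nn True 0 (int nn) \<in> ?X"
    using HS_H by (auto simp: HS_def)
  have sub: "\<forall>s\<in>{DM nn False (2 * int nn) 0, AM nn False 0 0, AM nn False 2 (- 2), AM nn True 0 (int nn), Nk}. s \<in> ?X"
    using I' Nki hs by (simp only: ball_simps)
  then show "s \<in> ?X" if "s \<in> {DM nn False (2 * int nn) 0, AM nn False 0 0, AM nn False 2 (- 2), AM nn True 0 (int nn), Nk}" for s
    using that by blast
  have "madj Nk = Nk" by (simp add: Nk_def madj_AM nn_pos cj_def AM_eq_iff)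
  then have mNk: "madj Nk \<in> ?X" using Nki by simp
  have mI': "madj (DM nn False (2 * int nn) 0) \<in> ?X"
  proof -
    have "madj (DM nn False (2 * int nn) 0) = mI"
      by (simp add: madj_DM nn_pos cj_def mI_DM[of nn] DM_eq_iff)
    then show ?thesis using H_I by simp
  qed
  have mhs: "madj (AM nn False 0 0) \<in> ?X" "madj (AM nn False 2 (- 2)) \<in> ?X" "madj (AM nn True 0 (int nn)) \<in> ?X"
    using hs madj_HS by (auto simp: HS_def)
  have msub: "\<forall>s\<in>{DM nn False (2 * int nn) 0, AM nn False 0 0, AM nn False 2 (- 2), AM nn True 0 (int nn), Nk}. madj s \<in> ?X"
    using mNk mI' mhs by (simp only: ball_simps)
  then show "madj s \<in> ?X" if "s \<in> {DM nn False (2 * int nn) 0, AM nn False 0 0, AM nn False 2 (- 2), AM nn True 0 (int nn), Nk}" for s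
    using that by blast
  show "H \<subseteq> gen_grp {DM nn False (2 * int nn) 0, AM nn False 0 0, AM nn False 2 (- 2), AM nn True 0 (int nn), Nk}"
    using H_G2 unfolding G2_def2 .
  show "Nk \<in> gen_grp {DM nn False (2 * int nn) 0, AM nn False 0 0, AM nn False 2 (- 2), AM nn True 0 (int nn), Nk}"
    by (rule gen_grp_gen) simp
qed


lemma nd_nn: "\<not> (2 * int nn) dvd int nn"
  using nn_pos by (auto dest: zdvd_imp_le)

lemma nd_par: "even k \<Longrightarrow> \<not> (2 * int nn) dvd (k - int m + c * int nn)"
proof
  assume k: "even k" and d: "(2 * int nn) dvd (k - int m + c * int nn)"
  then have "even (k - int m + c * int nn)" by (metis dvd_mult_left even_mult_iff dvd_trans)
  moreover have "even (c * int nn)" using nn_even by simp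
  ultimately have "even (k - int m)" by (metis even_add)
  with k have "even (int m)" by simp
  then show False using modd by simp
qed

lemma nd_par0: "even k \<Longrightarrow> \<not> (2 * int nn) dvd (k - int m)"
  using nd_par[of k 0] by simp
lemma nd_par1: "even k \<Longrightarrow> \<not> (2 * int nn) dvd (k - int m + int nn)"
  using nd_par[of k 1] by simp

lemma notH_D: "h \<in> H \<Longrightarrow> mmul h D \<notin> SH nn"
proof
  assume h: "h \<in> H" and hd: "mmul h D \<in> SH nn"
  from h H_SH have "h \<in> SH nn" by blast
  then show False
  proof (cases rule: SH_cases)
    case (1 e k1 k2)
    then have c: "(2 * int nn) dvd (k1 + k2 - (if e then int nn else 0))" by (simp add: condH_def)
    have "mmul h D = DM nn e (xe nn e False k1 0) (xe nn e False k2 (int nn))"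
      using 1 by (simp add: D_def mmul_enc nn_pos)
    with hd have "condH nn e (xe nn e False k1 0) (xe nn e False k2 (int nn))" by (simp add: DM_SH_iff nn_pos nn_even)
    then have c2: "(2 * int nn) dvd (k1 + k2 - (if e then int nn else 0)) + (if e then - int nn else int nn)"
      by (cases e) (simp_all add: condH_def xe_def algebra_simps)
    have "(2 * int nn) dvd (if e then - int nn else int nn)"
      using dvd_diff[OF c2 c] by simp
    then show False using nd_nn by (cases e) auto
  next
    case (2 e k1 k2)
    then have c: "(2 * int nn) dvd (k1 + k2 - (if e then int nn else 0))" by (simp add: condH_def)
    have "mmul h D = AM nn e (xe nn e False k1 (int nn)) (xe nn e False k2 0)"
      using 2 by (simp add: D_def mmul_enc nn_pos)
    with hd have "condH nn e (xe nn e False k1 (int nn)) (xe nn e False k2 0)" by (simp add: AM_SH_iff nn_pos nn_even)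
    then have c2: "(2 * int nn) dvd (k1 + k2 - (if e then int nn else 0)) + (if e then - int nn else int nn)"
      by (cases e) (simp_all add: condH_def xe_def algebra_simps)
    have "(2 * int nn) dvd (if e then - int nn else int nn)"
      using dvd_diff[OF c2 c] by simp
    then show False using nd_nn by (cases e) auto
  qed
qed

lemma notH_Nk: "h \<in> H \<Longrightarrow> mmul h Nk \<notin> SH nn"
proof
  assume h: "h \<in> H" and hd: "mmul h Nk \<in> SH nn"
  from h H_SH have "h \<in> SH nn" by blast
  then show False
  proof (cases rule: SH_cases)
    case (1 e k1 k2)
    then have ev: "even k1" by (simp add: condH_def)
    have "mmul h Nk = AM nn (\<not> e) (xe nn e True k1 (int m)) (xe nn e True k2 (int m + int nn))"
      using 1 by (simp add: Nk_def mmul_enc nn_pos)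
    with hd have "condH nn (\<not> e) (xe nn e True k1 (int m)) (xe nn e True k2 (int m + int nn))" by (simp add: AM_SH_iff nn_pos nn_even)
    then have "even (xe nn e True k1 (int m))" by (simp add: condH_def)
    then show False using ev modd nn_even by (cases e) (auto simp: xe_def)
  next
    case (2 e k1 k2)
    then have ev: "even k1" by (simp add: condH_def)
    have "mmul h Nk = DM nn (\<not> e) (xe nn e True k1 (int m + int nn)) (xe nn e True k2 (int m))"
      using 2 by (simp add: Nk_def mmul_enc nn_pos)
    with hd have "condH nn (\<not> e) (xe nn e True k1 (int m + int nn)) (xe nn e True k2 (int m))" by (simp add: DM_SH_iff nn_pos nn_even)
    then have "even (xe nn e True k1 (int m + int nn))" by (simp add: condH_def)
    then show False using ev modd nn_even by (cases e) (auto simp: xe_def)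
  qed
qed


lemma reflD: "h \<in> H \<Longrightarrow> is_reflection (mmul h D) \<Longrightarrow> mmul h D = D \<or> mmul h D = D'"
proof -
  assume h: "h \<in> H" and r: "is_reflection (mmul h D)"
  from h H_SH have "h \<in> SH nn" by blast
  then show ?thesis
  proof (cases rule: SH_cases)
    case (1 e k1 k2)
    then have c: "(2 * int nn) dvd (k1 + k2 - (if e then int nn else 0))" by (simp add: condH_def)
    have hd: "mmul h D = DM nn e (xe nn e False k1 0) (xe nn e False k2 (int nn))"
      using 1 by (simp add: D_def mmul_enc nn_pos)
    with r have ne: "\<not> e" by (simp add: refl_DM nn_pos)
    with hd have hd2: "mmul h D = DM nn False k1 (k2 + int nn)" by (simp add: xe_def)
    from ne c have c': "(2 * int nn) dvd (k1 + k2)" by simp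
    from r hd2 have "(2 * int nn) dvd k1 \<or> (2 * int nn) dvd (k2 + int nn)" by (simp add: refl_DM nn_pos)
    then show ?thesis
    proof
      assume a: "(2 * int nn) dvd k1"
      then have "(2 * int nn) dvd k2" using dvd_diff[OF c' a] by simp
      then have "mmul h D = D" using hd2 a by (simp add: D_def DM_eq_iff nn_pos)
      then show ?thesis by simp
    next
      assume a: "(2 * int nn) dvd (k2 + int nn)"
      then have "(2 * int nn) dvd (k1 - int nn)" using dvd_diff[OF c' a] by (simp add: algebra_simps)
      then have "mmul h D = D'" using hd2 a by (simp add: D'_def DM_eq_iff nn_pos)
      then show ?thesis by simp
    qed
  next
    case (2 e k1 k2)
    then have c: "(2 * int nn) dvd (k1 + k2 - (if e then int nn else 0))" and ev: "even k1" by (simp_all add: condH_def)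
    have hd: "mmul h D = AM nn e (xe nn e False k1 (int nn)) (xe nn e False k2 0)"
      using 2 by (simp add: D_def mmul_enc nn_pos)
    show ?thesis
    proof (cases e)
      case False
      with r hd have a: "(2 * int nn) dvd (k1 + int nn + k2)" by (simp add: refl_AM nn_pos xe_def)
      from c False have c': "(2 * int nn) dvd (k1 + k2)" by simp
      have "(2 * int nn) dvd (k1 + int nn + k2) - (k1 + k2)" by (rule dvd_diff[OF a c'])
      then show ?thesis using nd_nn by simp
    next
      case True
      with r hd have a: "(2 * int nn) dvd (k2 - (k1 - int nn) + int nn)" by (simp add: refl_AM nn_pos xe_def)
      from c True have c': "(2 * int nn) dvd (k1 + k2 - int nn)" by simp
      have "(2 * int nn) dvd (k1 + k2 - int nn) - (k2 - (k1 - int nn) + int nn) + 2 * int nn"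
        by (rule dvd_add[OF dvd_diff[OF c' a] dvd_refl])
      moreover have "(k1 + k2 - int nn) - (k2 - (k1 - int nn) + int nn) + 2 * int nn = 2 * (k1 - int m)"
        using int_nn by simp
      ultimately have "2 * int nn dvd 2 * (k1 - int m)" by (simp only:)
      then have "int nn dvd (k1 - int m)" by (simp only: mult_dvd_mono dvd_mult_cancel_left) simp
      then have "even (k1 - int m)" using nn_even by (metis dvd_trans even_of_nat)
      then show ?thesis using ev modd by simp
    qed
  qed
qed

lemma reflNk: "h \<in> H \<Longrightarrow> is_reflection (mmul h Nk) \<Longrightarrow> mmul h Nk = Nk \<or> mmul h Nk = NkM"
proof -
  assume h: "h \<in> H" and r: "is_reflection (mmul h Nk)"
  from h H_SH have "h \<in> SH nn" by blast
  then show ?thesis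
  proof (cases rule: SH_cases)
    case (1 e k1 k2)
    then have c: "(2 * int nn) dvd (k1 + k2 - (if e then int nn else 0))" by (simp add: condH_def)
    have hd: "mmul h Nk = AM nn (\<not> e) (xe nn e True k1 (int m)) (xe nn e True k2 (int m + int nn))"
      using 1 by (simp add: Nk_def mmul_enc nn_pos)
    show ?thesis
    proof (cases e)
      case False
      with hd have hd2: "mmul h Nk = AM nn True (k1 + int m) (k2 + (int m + int nn))" by (simp add: xe_def)
      with r have a: "(2 * int nn) dvd (k2 + (int m + int nn) - (k1 + int m) + int nn)" by (simp add: refl_AM nn_pos)
      from c False have c': "(2 * int nn) dvd (k1 + k2)" by simp
      have "(2 * int nn) dvd (k2 + (int m + int nn) - (k1 + int m) + int nn) - 2 * int nn"
        by (rule dvd_diff[OF a dvd_refl])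
      then have a': "(2 * int nn) dvd (k2 - k1)" by (simp add: algebra_simps)
      have "(2 * int nn) dvd (k1 + k2) - (k2 - k1)" by (rule dvd_diff[OF c' a'])
      then have "(2 * int nn) dvd 2 * k1" by (simp add: algebra_simps)
      then have "int nn dvd k1" by simp
      then obtain cc where k1: "k1 = int nn * cc" by (auto simp: dvd_def)
      show ?thesis
      proof (cases "even cc")
        case True
        then obtain dd where "cc = 2 * dd" by blast
        then have d1: "(2 * int nn) dvd k1" using k1 by simp
        then have d2: "(2 * int nn) dvd k2" using dvd_diff[OF c' d1] by simp
        have "mmul h Nk = Nk" using hd2 d1 d2 by (simp add: Nk_def AM_eq_iff nn_pos)
        then show ?thesis by simp
      next
        case False
        then obtain dd where "cc = 2 * dd + 1" using oddE by blast
        then have d1: "(2 * int nn) dvd (k1 - int nn)" using k1 by (simp add: algebra_simps)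
        have "(2 * int nn) dvd (k1 + k2) - (k1 - int nn) - 2 * int nn" by (rule dvd_diff[OF dvd_diff[OF c' d1] dvd_refl])
        then have d2: "(2 * int nn) dvd (k2 - int nn)" by (simp add: algebra_simps)
        have "mmul h Nk = NkM"
          unfolding hd2 NkM_def AM_eq_iff[OF nn_pos]
        proof (intro conjI)
          show "(2 * int nn) dvd (k1 + int m - (int m + int nn))" using d1 by (simp add: algebra_simps)
          have "(2 * int nn) dvd (k2 - int nn) + 2 * int nn" by (rule dvd_add[OF d2 dvd_refl])
          then show "(2 * int nn) dvd (k2 + (int m + int nn) - int m)" by (simp add: algebra_simps)
        qed simp
        then show ?thesis by simp
      qed
    next
      case True
      with hd have hd2: "mmul h Nk = AM nn False (k1 - int m + int nn) (k2 - (int m + int nn) + int nn)" by (simp add: xe_def)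
      with r have a: "(2 * int nn) dvd (k1 - int m + int nn + (k2 - (int m + int nn) + int nn))" by (simp add: refl_AM nn_pos)
      from c True have c': "(2 * int nn) dvd (k1 + k2 - int nn)" by simp
      have "k1 - int m + int nn + (k2 - (int m + int nn) + int nn) = k1 + k2" using int_nn by simp
      with a have a': "(2 * int nn) dvd (k1 + k2)" by simp
      have "(2 * int nn) dvd (k1 + k2) - (k1 + k2 - int nn)" by (rule dvd_diff[OF a' c'])
      then show ?thesis using nd_nn by simp
    qed
  next
    case (2 e k1 k2)
    then have ev: "even k1" "even k2" by (simp_all add: condH_def)
    have hd: "mmul h Nk = DM nn (\<not> e) (xe nn e True k1 (int m + int nn)) (xe nn e True k2 (int m))"
      using 2 by (simp add: Nk_def mmul_enc nn_pos)
    show ?thesis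
    proof (cases e)
      case False
      with r hd show ?thesis by (simp add: refl_DM nn_pos)
    next
      case True
      with hd have hd2: "mmul h Nk = DM nn False (k1 - (int m + int nn) + int nn) (k2 - int m + int nn)" by (simp add: xe_def)
      with r have "(2 * int nn) dvd (k1 - (int m + int nn) + int nn) \<or> (2 * int nn) dvd (k2 - int m + int nn)"
        by (simp add: refl_DM nn_pos)
      then show ?thesis using nd_par0[OF ev(1)] nd_par1[OF ev(2)] by (simp add: algebra_simps)
    qed
  qed
qed


definition fiso :: "m2 \<Rightarrow> m2" where "fiso g = (if g \<in> H then g else mmul g (mmul D Nk))"

lemma notH_D': "h \<in> H \<Longrightarrow> mmul h D \<notin> H" using notH_D H_SH by blast
lemma notH_Nk': "h \<in> H \<Longrightarrow> mmul h Nk \<notin> H" using notH_Nk H_SH by blast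

lemma fiso_H: "h \<in> H \<Longrightarrow> fiso h = h" by (simp add: fiso_def)
lemma fiso_HD: "h \<in> H \<Longrightarrow> fiso (mmul h D) = mmul h Nk"
  using notH_D' by (simp add: fiso_def mmul_assoc DD')

lemma NkNk'': "mmul (mmul x Nk) Nk = x" by (simp add: mmul_assoc NkNk)

lemma fiso_inj: "inj_on fiso (Ggrp m 1 m 2)"
proof (rule inj_onI)
  fix x y assume x: "x \<in> Ggrp m 1 m 2" and y: "y \<in> Ggrp m 1 m 2" and e: "fiso x = fiso y"
  from x y show "x = y" unfolding G1_decomp
  proof (elim UnE imageE)
    assume "x \<in> H" "y \<in> H" then show ?thesis using e by (simp add: fiso_H)
  next
    fix h2 assume "x \<in> H" "h2 \<in> H" "y = mmul h2 D"
    then show ?thesis using e fiso_H fiso_HD notH_Nk' by metis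
  next
    fix h1 assume "h1 \<in> H" "x = mmul h1 D" "y \<in> H"
    then show ?thesis using e fiso_H fiso_HD notH_Nk' by metis
  next
    fix h1 h2 assume "h1 \<in> H" "x = mmul h1 D" "h2 \<in> H" "y = mmul h2 D"
    then have "mmul h1 Nk = mmul h2 Nk" using e fiso_HD by simp
    then have "h1 = h2" by (metis NkNk'')
    then show ?thesis using \<open>x = mmul h1 D\<close> \<open>y = mmul h2 D\<close> by simp
  qed
qed

lemma fiso_image: "fiso ` Ggrp m 1 m 2 = Ggrp (2 * m) 2 m 1"
proof -
  have "fiso ` H = H" using fiso_H by (simp add: image_cong[OF refl fiso_H])
  moreover have "fiso ` ((\<lambda>h. mmul h D) ` H) = (\<lambda>h. mmul h Nk) ` H"
    unfolding image_image using fiso_HD by (simp add: image_cong[OF refl fiso_HD])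
  ultimately show ?thesis unfolding G1_decomp G2_decomp by (simp add: image_Un)
qed

lemma fiso_hom:
  assumes x: "x \<in> Ggrp m 1 m 2" and y: "y \<in> Ggrp m 1 m 2"
  shows "fiso (mmul x y) = mmul (fiso x) (fiso y)"
  using x y unfolding G1_decomp
proof (elim UnE imageE)
  assume "x \<in> H" "y \<in> H" then show ?thesis using H_mult fiso_H by simp
next
  fix h2 assume h: "x \<in> H" "h2 \<in> H" "y = mmul h2 D"
  then have e: "mmul x y = mmul (mmul x h2) D" by (simp add: mmul_assoc)
  have "fiso (mmul (mmul x h2) D) = mmul (mmul x h2) Nk" using fiso_HD H_mult h by blast
  then show ?thesis using h e fiso_H fiso_HD by (simp add: mmul_assoc)
next
  fix h1 assume h: "h1 \<in> H" "x = mmul h1 D" "y \<in> H"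
  obtain c where c: "c = mmul D (mmul y D)" by blast
  have cH: "c \<in> H" "c = mmul Nk (mmul y Nk)" using conj_H[OF h(3)] c by auto
  have "mmul x y = mmul (mmul h1 c) D" using h c by (simp add: mmul_assoc DD)
  then have "fiso (mmul x y) = mmul (mmul h1 c) Nk" using fiso_HD H_mult h cH by simp
  moreover have "mmul (fiso x) (fiso y) = mmul (mmul h1 c) Nk"
    using h cH fiso_HD fiso_H by (simp add: mmul_assoc NkNk)
  ultimately show ?thesis by simp
next
  fix h1 h2 assume h: "h1 \<in> H" "x = mmul h1 D" "h2 \<in> H" "y = mmul h2 D"
  obtain c where c: "c = mmul D (mmul h2 D)" by blast
  have cH: "c \<in> H" "c = mmul Nk (mmul h2 Nk)" using conj_H[OF h(3)] c by auto
  have "mmul x y = mmul h1 c" using h c by (simp add: mmul_assoc)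
  then have "fiso (mmul x y) = mmul h1 c" using fiso_H H_mult h cH by simp
  moreover have "mmul (fiso x) (fiso y) = mmul h1 c"
    using h cH fiso_HD by (simp add: mmul_assoc)
  ultimately show ?thesis by simp
qed

lemma refl_D: "is_reflection D" using nn_pos by (simp add: D_def refl_DM)
lemma refl_D': "is_reflection D'" using nn_pos by (simp add: D'_def refl_DM)
lemma refl_Nk: "is_reflection Nk" using nn_pos by (simp add: Nk_def refl_AM)
lemma refl_NkM: "is_reflection NkM" using nn_pos by (simp add: NkM_def refl_AM)

lemma fiso_D: "fiso D = Nk" using fiso_HD[OF H_I] by simp
lemma fiso_D': "fiso D' = NkM" using fiso_HD[OF mI_neg_H] D'_eq NkM_eq by simp

lemma fiso_refl: "fiso ` {g \<in> Ggrp m 1 m 2. is_reflection g} = {g \<in> Ggrp (2 * m) 2 m 1. is_reflection g}"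
proof
  have "D = mmul mI D" by simp
  then have DG1: "D \<in> Ggrp m 1 m 2" unfolding G1_decomp using H_I by blast
  have DG2: "D' \<in> Ggrp m 1 m 2" unfolding G1_decomp using mI_neg_H D'_eq by blast
  note DG = DG1 DG2
  have "Nk = mmul mI Nk" by simp
  then have NG1: "Nk \<in> Ggrp (2 * m) 2 m 1" unfolding G2_decomp using H_I by blast
  have NG2: "NkM \<in> Ggrp (2 * m) 2 m 1" unfolding G2_decomp using mI_neg_H NkM_eq by blast
  note NG = NG1 NG2
  show "fiso ` {g \<in> Ggrp m 1 m 2. is_reflection g} \<subseteq> {g \<in> Ggrp (2 * m) 2 m 1. is_reflection g}"
  proof
    fix y assume "y \<in> fiso ` {g \<in> Ggrp m 1 m 2. is_reflection g}"
    then obtain x where x: "x \<in> Ggrp m 1 m 2" "is_reflection x" "y = fiso x" by blast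
    from x(1) show "y \<in> {g \<in> Ggrp (2 * m) 2 m 1. is_reflection g}" unfolding G1_decomp
    proof (elim UnE imageE)
      assume "x \<in> H" then show ?thesis using x fiso_H H_G2 by auto
    next
      fix h assume h: "h \<in> H" "x = mmul h D"
      then have "x = D \<or> x = D'" using reflD x(2) by simp
      then show ?thesis using x(3) fiso_D fiso_D' NG refl_Nk refl_NkM by auto
    qed
  qed
  show "{g \<in> Ggrp (2 * m) 2 m 1. is_reflection g} \<subseteq> fiso ` {g \<in> Ggrp m 1 m 2. is_reflection g}"
  proof
    fix y assume y: "y \<in> {g \<in> Ggrp (2 * m) 2 m 1. is_reflection g}"
    then have yG: "y \<in> H \<union> (\<lambda>h. mmul h Nk) ` H" and yr: "is_reflection y" unfolding G2_decomp by auto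
    from yG show "y \<in> fiso ` {g \<in> Ggrp m 1 m 2. is_reflection g}"
    proof (elim UnE imageE)
      assume "y \<in> H" then show ?thesis using yr fiso_H H_G1 by (auto intro!: image_eqI[where x=y])
    next
      fix h assume h: "h \<in> H" "y = mmul h Nk"
      then have "y = Nk \<or> y = NkM" using reflNk yr by simp
      then show ?thesis
      proof
        assume "y = Nk" then show ?thesis using fiso_D DG refl_D by (auto intro!: image_eqI[where x=D])
      next
        assume "y = NkM" then show ?thesis using fiso_D' DG refl_D' by (auto intro!: image_eqI[where x=D'])
      qed
    qed
  qed
qed

lemma part2_loc:
  "\<exists>f. refl_iso f (Ggrp m 1 m 2) (Ggrp (2 * m) 2 m 1)
                 \<and> f (M2 1 0 0 (-1)) = M2 0 quat_k (- quat_k) 0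
                 \<and> f (Nmat 1) = Nmat 1
                 \<and> f (Nmat (omega m)) = Nmat (omega m)
                 \<and> f (Nmat quat_j) = Nmat quat_j"
proof (intro exI conjI)
  show "refl_iso fiso (Ggrp m 1 m 2) (Ggrp (2 * m) 2 m 1)"
    unfolding refl_iso_def using fiso_inj fiso_image fiso_hom fiso_refl by (auto simp: bij_betw_def)
  show "fiso (M2 1 0 0 (-1)) = M2 0 quat_k (- quat_k) 0" unfolding D_eq Nk_eq by (rule fiso_D)
  have hs: "AM nn False 0 0 \<in> H" "AM nn False 2 (- 2) \<in> H" "AM nn True 0 (int nn) \<in> H"
    using HS_H by (auto simp: HS_def)
  show "fiso (Nmat 1) = Nmat 1" unfolding N1_eq using hs fiso_H by simp
  show "fiso (Nmat (omega m)) = Nmat (omega m)" unfolding Nw_eq using hs fiso_H by simp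
  show "fiso (Nmat quat_j) = Nmat quat_j" unfolding Nj_eq using hs fiso_H by simp
qed

end


theorem theorem5p7:
  shows "(\<forall>n n' a b r a' b' r'. 2 \<le> n \<longrightarrow> 2 \<le> n' \<longrightarrow>
            (n, a, b, r) \<in> Lambda_set n \<longrightarrow> (n', a', b', r') \<in> Lambda_set n' \<longrightarrow>
            (n, a, b, r) \<noteq> (n', a', b', r') \<longrightarrow>
            refl_isomorphic (Ggrp n a b r) (Ggrp n' a' b' r') \<longrightarrow>
            (\<exists>m. odd m \<and> {(n, a, b, r), (n', a', b', r')} = {(m, 1, m, 2), (2 * m, 2, m, 1)}))
       \<and> (\<forall>m::nat. odd m \<and> 3 \<le> m \<longrightarrow>
            (\<exists>f. refl_iso f (Ggrp m 1 m 2) (Ggrp (2 * m) 2 m 1)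
                 \<and> f (M2 1 0 0 (-1)) = M2 0 quat_k (- quat_k) 0
                 \<and> f (Nmat 1) = Nmat 1
                 \<and> f (Nmat (omega m)) = Nmat (omega m)
                 \<and> f (Nmat quat_j) = Nmat quat_j))"
proof (intro conjI allI impI)
  fix n n' a b r a' b' r' :: nat
  assume "2 \<le> n" "2 \<le> n'" "(n, a, b, r) \<in> Lambda_set n" "(n', a', b', r') \<in> Lambda_set n'"
    "(n, a, b, r) \<noteq> (n', a', b', r')" "refl_isomorphic (Ggrp n a b r) (Ggrp n' a' b' r')"
  then show "\<exists>m. odd m \<and> {(n, a, b, r), (n', a', b', r')} = {(m, 1, m, 2), (2 * m, 2, m, 1)}"
    by (rule part1)
next
  fix m :: nat
  assume "odd m \<and> 3 \<le> m"
  then interpret pt2 m by unfold_locales auto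
  show "\<exists>f. refl_iso f (Ggrp m 1 m 2) (Ggrp (2 * m) 2 m 1)
                 \<and> f (M2 1 0 0 (-1)) = M2 0 quat_k (- quat_k) 0
                 \<and> f (Nmat 1) = Nmat 1
                 \<and> f (Nmat (omega m)) = Nmat (omega m)
                 \<and> f (Nmat quat_j) = Nmat quat_j"
    by (rule part2_loc)
qed

end
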